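(* Let $K$ be a local field of characteristic $0$, $D$ a finite-dimensional division $K$-algebra, and $A,H$ finite subgroups of $\mathrm{GL}_n(D)$. Set $C=A\cap H$ and assume $[A:C]>2$ or $[H:C]>2$. Let $\delta:H\to M_n(D)$, $h\mapsto\delta_h$, be such that $\varphi_t:H\to\mathrm{GL}_n(D)$, $h\mapsto h+t\delta_h$ ($t\in K^\times$), is a family of first-order deformations, and assume (i) for $g\in H$: $\delta_g=0$ if and only if $g\in C$; and (ii) $a\,\mathrm{im}(\delta_h)\cap\ker(\delta_{h'})=\{0\}$ for all $a\in A\setminus C$ and $h,h'\in H\setminus C$. Then there exists $N\in\mathbb{R}$ such that for all $t$ with $|t|\ge N$, $\langle A,\varphi_t(H)\rangle\cong A*_C\varphi_t(H)\cong A*_C H$ (the first isomorphism being the canonical map).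
   Context: A first-order deformation of a subgroup $H$ of the unit group of an algebra is a linear map $\varphi$, $h\mapsto h+\delta_h$, where $\delta$ satisfies $\delta_{hk}=\delta_hk+h\delta_k$ and $\delta_h\delta_k=0$ for all $h,k\in H$; such maps are group morphisms. Here $\mathrm{im}(\delta_h)$ and $\ker(\delta_h)$ are the image and kernel of $\delta_h$ acting on $D^n$ (as $D$-subspaces). *)

theory Defs
  imports Main "Jordan_Normal_Form.Matrix"
begin

text \<open>D is modelled as a type of class division_ring; K is a central subfield of D
  (so D is a K-algebra), carrying an absolute value av.\<close>

definition central_subfield :: "'d::division_ring set \<Rightarrow> bool" where
  "central_subfield K \<longleftrightarrow> 0 \<in> K \<and> 1 \<in> K \<and>
     (\<forall>x\<in>K. \<forall>y\<in>K. x + y \<in> K \<and> x - y \<in> K \<and> x * y \<in> K) \<and>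
     (\<forall>x\<in>K. x \<noteq> 0 \<longrightarrow> inverse x \<in> K) \<and>
     (\<forall>x\<in>K. \<forall>d. x * d = d * x)"

definition absolute_value_on :: "'d::division_ring set \<Rightarrow> ('d \<Rightarrow> real) \<Rightarrow> bool" where
  "absolute_value_on K av \<longleftrightarrow>
     (\<forall>x\<in>K. av x \<ge> 0 \<and> (av x = 0 \<longleftrightarrow> x = 0)) \<and>
     (\<forall>x\<in>K. \<forall>y\<in>K. av (x * y) = av x * av y \<and> av (x + y) \<le> av x + av y)"

definition av_converges :: "'d::division_ring set \<Rightarrow> ('d \<Rightarrow> real) \<Rightarrow> (nat \<Rightarrow> 'd) \<Rightarrow> 'd \<Rightarrow> bool" where
  "av_converges K av s l \<longleftrightarrow> (\<forall>e>0. \<exists>M. \<forall>i\<ge>M. av (s i - l) < e)"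

text \<open>Local field: non-discrete (non-trivial absolute value), complete and locally compact
  (some closed ball around 0 is (sequentially) compact) for the metric av(x - y).\<close>
definition is_local_field :: "'d::division_ring set \<Rightarrow> ('d \<Rightarrow> real) \<Rightarrow> bool" where
  "is_local_field K av \<longleftrightarrow> central_subfield K \<and> absolute_value_on K av \<and>
     (\<exists>x\<in>K. 0 < av x \<and> av x < 1) \<and>
     (\<forall>s::nat \<Rightarrow> 'd. (\<forall>i. s i \<in> K) \<longrightarrow> (\<forall>e>0. \<exists>M. \<forall>i\<ge>M. \<forall>j\<ge>M. av (s i - s j) < e) \<longrightarrow>
          (\<exists>l\<in>K. av_converges K av s l)) \<and>
     (\<exists>r>0. \<forall>s::nat \<Rightarrow> 'd. (\<forall>i. s i \<in> K \<and> av (s i) \<le> r) \<longrightarrow>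
          (\<exists>l\<in>K. \<exists>\<sigma>. strict_mono \<sigma> \<and> av_converges K av (s \<circ> \<sigma>) l))"

definition char_zero_ring :: "'d::division_ring itself \<Rightarrow> bool" where
  "char_zero_ring _ \<longleftrightarrow> (\<forall>m::nat. m > 0 \<longrightarrow> (of_nat m :: 'd) \<noteq> 0)"

definition finite_dim_over :: "'d::division_ring set \<Rightarrow> bool" where
  "finite_dim_over K \<longleftrightarrow> (\<exists>bs::'d list. \<forall>d. \<exists>ks. length ks = length bs \<and> set ks \<subseteq> K \<and>
      d = (\<Sum>i<length bs. ks ! i * bs ! i))"

definition GL_mat :: "nat \<Rightarrow> 'd::division_ring mat set" where
  "GL_mat n = {M \<in> carrier_mat n n. \<exists>M'\<in>carrier_mat n n. M * M' = 1\<^sub>m n \<and> M' * M = 1\<^sub>m n}"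

definition finite_subgroup_GL :: "nat \<Rightarrow> 'd::division_ring mat set \<Rightarrow> bool" where
  "finite_subgroup_GL n G \<longleftrightarrow> finite G \<and> G \<subseteq> GL_mat n \<and> 1\<^sub>m n \<in> G \<and>
     (\<forall>g\<in>G. \<forall>h\<in>G. g * h \<in> G) \<and> (\<forall>g\<in>G. \<exists>g'\<in>G. g * g' = 1\<^sub>m n \<and> g' * g = 1\<^sub>m n)"

definition subgroup_GL :: "nat \<Rightarrow> 'd::division_ring mat set \<Rightarrow> bool" where
  "subgroup_GL n G \<longleftrightarrow> G \<subseteq> GL_mat n \<and> 1\<^sub>m n \<in> G \<and>
     (\<forall>g\<in>G. \<forall>h\<in>G. g * h \<in> G) \<and> (\<forall>g\<in>G. \<exists>g'\<in>G. g * g' = 1\<^sub>m n \<and> g' * g = 1\<^sub>m n)"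

definition gen_subgroup :: "nat \<Rightarrow> 'd::division_ring mat set \<Rightarrow> 'd mat set" where
  "gen_subgroup n S = \<Inter>{G. subgroup_GL n G \<and> S \<subseteq> G}"

definition sub_index :: "'d::division_ring mat set \<Rightarrow> 'd mat set \<Rightarrow> nat" where
  "sub_index G C = card ((\<lambda>g. (\<lambda>c. g * c) ` C) ` G)"

definition first_order_deformation :: "nat \<Rightarrow> 'd::division_ring mat set \<Rightarrow> ('d mat \<Rightarrow> 'd mat) \<Rightarrow> bool" where
  "first_order_deformation n H \<delta> \<longleftrightarrow>
     (\<forall>h\<in>H. \<delta> h \<in> carrier_mat n n) \<and>
     (\<forall>h\<in>H. \<forall>k\<in>H. \<delta> (h * k) = \<delta> h * k + h * \<delta> k) \<and>
     (\<forall>h\<in>H. \<forall>k\<in>H. \<delta> h * \<delta> k = 0\<^sub>m n n)"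

definition deform :: "('d::division_ring mat \<Rightarrow> 'd mat) \<Rightarrow> 'd \<Rightarrow> 'd mat \<Rightarrow> 'd mat" where
  "deform \<delta> t h = h + t \<cdot>\<^sub>m \<delta> h"

definition mat_im :: "nat \<Rightarrow> 'd::division_ring mat \<Rightarrow> 'd vec set" where
  "mat_im n M = {M *\<^sub>v v | v. v \<in> carrier_vec n}"

definition mat_ker :: "nat \<Rightarrow> 'd::division_ring mat \<Rightarrow> 'd vec set" where
  "mat_ker n M = {v \<in> carrier_vec n. M *\<^sub>v v = 0\<^sub>v n}"

text \<open>For subgroups A, B of GL_n(D) with common subgroup C, the amalgamated free product
  A *_C B is the quotient of the free monoid on the disjoint union A + B by the congruence
  generated by the multiplication tables of A and B, the identification of the identities
  with the empty word, and the identification of the two copies of C.\<close>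

definition amalg_words :: "'d::division_ring mat set \<Rightarrow> 'd mat set \<Rightarrow> ('d mat + 'd mat) list set" where
  "amalg_words A B = {w. \<forall>x\<in>set w. (case x of Inl a \<Rightarrow> a \<in> A | Inr b \<Rightarrow> b \<in> B)}"

inductive amalg_step :: "nat \<Rightarrow> 'd::division_ring mat set \<Rightarrow> 'd mat set \<Rightarrow> 'd mat set \<Rightarrow>
    ('d mat + 'd mat) list \<Rightarrow> ('d mat + 'd mat) list \<Rightarrow> bool"
  for n A C B where
  mulA: "x \<in> A \<Longrightarrow> y \<in> A \<Longrightarrow> amalg_step n A C B (u @ [Inl x, Inl y] @ v) (u @ [Inl (x * y)] @ v)"
| mulB: "x \<in> B \<Longrightarrow> y \<in> B \<Longrightarrow> amalg_step n A C B (u @ [Inr x, Inr y] @ v) (u @ [Inr (x * y)] @ v)"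
| oneA: "amalg_step n A C B (u @ [Inl (1\<^sub>m n)] @ v) (u @ v)"
| oneB: "amalg_step n A C B (u @ [Inr (1\<^sub>m n)] @ v) (u @ v)"
| amal: "c \<in> C \<Longrightarrow> amalg_step n A C B (u @ [Inl c] @ v) (u @ [Inr c] @ v)"

definition amalg_eq :: "nat \<Rightarrow> 'd::division_ring mat set \<Rightarrow> 'd mat set \<Rightarrow> 'd mat set \<Rightarrow>
    ('d mat + 'd mat) list \<Rightarrow> ('d mat + 'd mat) list \<Rightarrow> bool" where
  "amalg_eq n A C B = equivclp (amalg_step n A C B)"

definition eval_word :: "nat \<Rightarrow> ('d::division_ring mat + 'd mat) list \<Rightarrow> 'd mat" where
  "eval_word n w = foldr (\<lambda>x acc. case_sum id id x * acc) w (1\<^sub>m n)"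

text \<open>The canonical map A *_C B \<rightarrow> <A, B> is an isomorphism (well-defined on classes,
  injective and onto the generated subgroup).\<close>
definition amalg_canonical_iso :: "nat \<Rightarrow> 'd::division_ring mat set \<Rightarrow> 'd mat set \<Rightarrow> 'd mat set \<Rightarrow> bool" where
  "amalg_canonical_iso n A C B \<longleftrightarrow>
     (\<forall>w1\<in>amalg_words A B. \<forall>w2\<in>amalg_words A B.
        eval_word n w1 = eval_word n w2 \<longleftrightarrow> amalg_eq n A C B w1 w2) \<and>
     eval_word n ` amalg_words A B = gen_subgroup n (A \<union> B)"

text \<open>The map A *_C B \<rightarrow> A *_C B' induced by id on A and f on B is an isomorphism
  (well-defined, injective, surjective on classes).\<close>
definition map_word :: "('d mat \<Rightarrow> 'd mat) \<Rightarrow> ('d mat + 'd mat) list \<Rightarrow> ('d mat + 'd mat) list" where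
  "map_word f w = map (map_sum id f) w"

definition amalg_induced_iso :: "nat \<Rightarrow> ('d::division_ring mat \<Rightarrow> 'd mat) \<Rightarrow> 'd mat set \<Rightarrow> 'd mat set \<Rightarrow>
    'd mat set \<Rightarrow> 'd mat set \<Rightarrow> bool" where
  "amalg_induced_iso n f A C B B' \<longleftrightarrow>
     (\<forall>w1\<in>amalg_words A B. \<forall>w2\<in>amalg_words A B.
        amalg_eq n A C B w1 w2 \<longleftrightarrow> amalg_eq n A C B' (map_word f w1) (map_word f w2)) \<and>
     (\<forall>w'\<in>amalg_words A B'. \<exists>w\<in>amalg_words A B. amalg_eq n A C B' (map_word f w) w')"

end

theory Submission
  imports Defs
begin


locale KD =
  fixes K :: "'d::division_ring set" and av :: "'d \<Rightarrow> real"
  assumes cs: "central_subfield K" and absv: "absolute_value_on K av"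
begin

lemma K0: "0 \<in> K" and K1: "1 \<in> K"
  and Kadd: "x \<in> K \<Longrightarrow> y \<in> K \<Longrightarrow> x + y \<in> K"
  and Kdiff: "x \<in> K \<Longrightarrow> y \<in> K \<Longrightarrow> x - y \<in> K"
  and Kmult: "x \<in> K \<Longrightarrow> y \<in> K \<Longrightarrow> x * y \<in> K"
  and Kinv: "x \<in> K \<Longrightarrow> inverse x \<in> K"
  and Kcomm: "x \<in> K \<Longrightarrow> x * d = d * x"
  using cs unfolding central_subfield_def
  by (simp_all, metis inverse_zero)

lemma Kuminus: "x \<in> K \<Longrightarrow> - x \<in> K"
  using Kdiff[OF K0, of x] by simp

lemma Ksum: "(\<And>i. i \<in> I \<Longrightarrow> f i \<in> K) \<Longrightarrow> sum f I \<in> K"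
proof (induction I rule: infinite_finite_induct)
  case (infinite A) then show ?case by (simp add: K0)
next
  case empty then show ?case by (simp add: K0)
next
  case (insert x F) then show ?case by (simp add: Kadd)
qed

lemma av_nonneg: "x \<in> K \<Longrightarrow> av x \<ge> 0"
  and av_zero_iff: "x \<in> K \<Longrightarrow> av x = 0 \<longleftrightarrow> x = 0"
  and av_mult: "x \<in> K \<Longrightarrow> y \<in> K \<Longrightarrow> av (x * y) = av x * av y"
  and av_add: "x \<in> K \<Longrightarrow> y \<in> K \<Longrightarrow> av (x + y) \<le> av x + av y"
  using absv unfolding absolute_value_on_def by auto

lemma av_one: "av 1 = 1"
proof -
  have "av 1 = av 1 * av 1" using av_mult[OF K1 K1] by simp
  moreover have "av 1 \<noteq> 0" using av_zero_iff[OF K1] by simp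
  ultimately show ?thesis by simp
qed

lemma av_uminus: "x \<in> K \<Longrightarrow> av (- x) = av x"
proof -
  assume x: "x \<in> K"
  have m1: "-1 \<in> K" using Kuminus[OF K1] .
  have "av (-1) * av (-1) = 1" using av_mult[OF m1 m1] av_one by simp
  moreover have "av (-1) \<ge> 0" using av_nonneg[OF m1] .
  ultimately have "av (-1) = 1"
    using square_eq_1_iff[of "av (-1)"] by auto
  then show ?thesis using av_mult[OF m1 x] by simp
qed

lemma av_diff: "x \<in> K \<Longrightarrow> y \<in> K \<Longrightarrow> av (x - y) \<le> av x + av y"
  using av_add[of x "- y"] av_uminus[of y] Kuminus[of y] by simp

lemma av_inverse: "x \<in> K \<Longrightarrow> x \<noteq> 0 \<Longrightarrow> av (inverse x) = 1 / av x"
proof -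
  assume x: "x \<in> K" "x \<noteq> 0"
  have h: "av (inverse x) * av x = 1" using av_mult[OF Kinv[OF x(1)] x(1)] x av_one by simp
  have nz: "av x \<noteq> 0" using av_zero_iff x by simp
  from h nz show ?thesis by (simp add: eq_divide_eq del: inverse_eq_divide)
qed

lemma av_sum: "(\<And>i. i \<in> I \<Longrightarrow> f i \<in> K) \<Longrightarrow> av (sum f I) \<le> (\<Sum>i\<in>I. av (f i))"
proof (induction I rule: infinite_finite_induct)
  case (infinite A) then show ?case using av_zero_iff[OF K0] by simp
next
  case empty then show ?case using av_zero_iff[OF K0] by simp
next
  case (insert x F)
  have "av (sum f (insert x F)) = av (f x + sum f F)" using insert by simp
  also have "\<dots> \<le> av (f x) + av (sum f F)" using insert by (intro av_add) (auto intro: Ksum)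
  also have "\<dots> \<le> av (f x) + (\<Sum>i\<in>F. av (f i))" using insert by simp
  finally show ?case using insert by simp
qed

definition spans :: "'d set \<Rightarrow> bool" where
  "spans S \<longleftrightarrow> finite S \<and> (\<forall>d. \<exists>k. (\<forall>s\<in>S. k s \<in> K) \<and> d = (\<Sum>s\<in>S. k s * s))"

lemma spans_from_list:
  assumes "finite_dim_over K" shows "\<exists>S. spans S"
proof -
  from assms obtain bs :: "'d list" where bs: "\<forall>d. \<exists>ks. length ks = length bs \<and> set ks \<subseteq> K \<and>
      d = (\<Sum>i<length bs. ks ! i * bs ! i)" unfolding finite_dim_over_def by blast
  have "spans (set bs)" unfolding spans_def
  proof (intro conjI allI)
    fix d
    obtain ks where ks: "length ks = length bs" "set ks \<subseteq> K" "d = (\<Sum>i<length bs. ks ! i * bs ! i)"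
      using bs by blast
    define k where "k s = (\<Sum>i\<in>{i\<in>{..<length bs}. bs ! i = s}. ks ! i)" for s
    have kK: "\<forall>s\<in>set bs. k s \<in> K" unfolding k_def
      using ks by (auto intro!: Ksum simp: subset_iff)
    have "(\<Sum>s\<in>set bs. k s * s) = (\<Sum>s\<in>set bs. (\<Sum>i\<in>{i\<in>{..<length bs}. bs ! i = s}. ks ! i * bs ! i))"
      unfolding k_def by (auto simp: sum_distrib_right intro!: sum.cong)
    also have "\<dots> = (\<Sum>i<length bs. ks ! i * bs ! i)"
      by (rule sum.group) auto
    finally show "\<exists>k. (\<forall>s\<in>set bs. k s \<in> K) \<and> d = (\<Sum>s\<in>set bs. k s * s)"
      using kK ks(3) by metis
  qed simp
  then show ?thesis by blast
qed

lemma spans_min_indep: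
  assumes sp: "spans S" and mn: "\<And>T. spans T \<Longrightarrow> card S \<le> card T"
    and kK: "\<forall>s\<in>S. k s \<in> K" and z: "(\<Sum>s\<in>S. k s * s) = 0" and s0: "s0 \<in> S"
  shows "k s0 = 0"
proof (rule ccontr)
  assume nz: "k s0 \<noteq> 0"
  have fin: "finite S" using sp spans_def by auto
  let ?S' = "S - {s0}"
  have decomp: "(\<Sum>s\<in>S. f s) = f s0 + (\<Sum>s\<in>?S'. f s)" for f :: "'d \<Rightarrow> 'd"
    using fin s0 by (simp add: sum.remove)
  have "k s0 * s0 = - (\<Sum>s\<in>?S'. k s * s)" using z decomp[of "\<lambda>s. k s * s"]
    by (simp add: eq_neg_iff_add_eq_0)
  then have e1: "k s0 * s0 = - (\<Sum>s\<in>?S'. k s * s)" .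
  have "s0 = inverse (k s0) * (k s0 * s0)" using nz by (simp add: mult.assoc[symmetric])
  also have "\<dots> = inverse (k s0) * (- (\<Sum>s\<in>?S'. k s * s))" by (simp only: e1)
  also have "\<dots> = - (\<Sum>s\<in>?S'. inverse (k s0) * k s * s)" by (simp add: sum_distrib_left mult.assoc)
  finally have s0e: "s0 = - (\<Sum>s\<in>?S'. inverse (k s0) * k s * s)" .
  have "spans ?S'" unfolding spans_def
  proof (intro conjI allI)
    show "finite ?S'" using fin by simp
    fix d
    obtain c where c: "\<forall>s\<in>S. c s \<in> K" "d = (\<Sum>s\<in>S. c s * s)" using sp unfolding spans_def by blast
    define c' where "c' s = c s - c s0 * inverse (k s0) * k s" for s
    have "d = c s0 * s0 + (\<Sum>s\<in>?S'. c s * s)" using c(2) decomp by simp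
    also have "c s0 * s0 = - (\<Sum>s\<in>?S'. c s0 * inverse (k s0) * k s * s)"
      by (subst s0e) (simp add: sum_distrib_left mult.assoc)
    finally have "d = (\<Sum>s\<in>?S'. c' s * s)"
      unfolding c'_def by (simp add: sum_subtractf left_diff_distrib)
    moreover have "\<forall>s\<in>?S'. c' s \<in> K" unfolding c'_def using c(1) kK s0 nz
      by (auto intro!: Kdiff Kmult Kinv)
    ultimately show "\<exists>k. (\<forall>s\<in>?S'. k s \<in> K) \<and> d = (\<Sum>s\<in>?S'. k s * s)" by blast
  qed
  then have "card S \<le> card ?S'" by (rule mn)
  moreover have "card ?S' < card S" by (metis card_Diff1_less fin s0)
  ultimately show False by simp
qed

lemma exists_basis:
  assumes "finite_dim_over K"
  shows "\<exists>S. spans S \<and> (\<forall>k. (\<forall>s\<in>S. k s \<in> K) \<longrightarrow> (\<Sum>s\<in>S. k s * s) = 0 \<longrightarrow> (\<forall>s\<in>S. k s = 0))"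
proof -
  obtain S0 where "spans S0" using spans_from_list[OF assms] by blast
  then have ex: "\<exists>m S. spans S \<and> card S = m" by blast
  define m where "m = (LEAST m. \<exists>S. spans S \<and> card S = m)"
  obtain S where S: "spans S" "card S = m" using LeastI_ex[OF ex] unfolding m_def by blast
  have mn: "card S \<le> card T" if "spans T" for T
  proof -
    have "\<exists>S'. spans S' \<and> card S' = card T" using that by blast
    then have "m \<le> card T" unfolding m_def by (rule Least_le)
    then show ?thesis using S(2) by simp
  qed
  show ?thesis using spans_min_indep[OF S(1) mn] S(1) by blast
qed

end

locale KB = KD +
  fixes S
  assumes Ssp: "spans S"
    and Sind: "\<And>k. (\<forall>s\<in>S. k s \<in> K) \<Longrightarrow> (\<Sum>s\<in>S. k s * s) = 0 \<Longrightarrow> s \<in> S \<Longrightarrow> k s = 0"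
begin

lemma Sfin: "finite S" using Ssp spans_def by auto

definition cf :: "'a \<Rightarrow> 'a \<Rightarrow> 'a" where
  "cf d = (SOME k. (\<forall>s\<in>S. k s \<in> K) \<and> d = (\<Sum>s\<in>S. k s * s))"

lemma cf_spec: "(\<forall>s\<in>S. cf d s \<in> K) \<and> d = (\<Sum>s\<in>S. cf d s * s)"
proof -
  have "\<exists>k. (\<forall>s\<in>S. k s \<in> K) \<and> d = (\<Sum>s\<in>S. k s * s)" using Ssp spans_def by auto
  then show ?thesis unfolding cf_def by (rule someI_ex)
qed

lemma cf_in: "cf d s \<in> K" if "s \<in> S" using cf_spec that by auto

lemma cf_sum: "d = (\<Sum>s\<in>S. cf d s * s)" using cf_spec by auto

lemma cf_unique:
  assumes "\<forall>s\<in>S. k s \<in> K" "d = (\<Sum>s\<in>S. k s * s)" "s \<in> S"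
  shows "cf d s = k s"
proof -
  have "(\<Sum>s\<in>S. (cf d s - k s) * s) = 0"
    using cf_sum[of d] assms(2) by (simp add: left_diff_distrib sum_subtractf)
  then have "cf d s - k s = 0"
    using Sind[of "\<lambda>s. cf d s - k s"] assms by (auto intro: Kdiff cf_in)
  then show ?thesis by simp
qed

lemma cf_add: "s \<in> S \<Longrightarrow> cf (d + e) s = cf d s + cf e s"
  by (rule cf_unique) (auto intro: Kadd cf_in simp: sum.distrib distrib_right cf_sum[symmetric])

lemma cf_diff: "s \<in> S \<Longrightarrow> cf (d - e) s = cf d s - cf e s"
  by (rule cf_unique) (auto intro: Kdiff cf_in simp: sum_subtractf left_diff_distrib cf_sum[symmetric])

lemma cf_smult: "x \<in> K \<Longrightarrow> s \<in> S \<Longrightarrow> cf (x * d) s = x * cf d s"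
proof (rule cf_unique)
  assume x: "x \<in> K"
  have "x * d = x * (\<Sum>s\<in>S. cf d s * s)" using cf_sum by metis
  also have "\<dots> = (\<Sum>s\<in>S. x * cf d s * s)" by (simp add: sum_distrib_left mult.assoc)
  finally show "x * d = (\<Sum>s\<in>S. x * cf d s * s)" .
  show "\<forall>s\<in>S. x * cf d s \<in> K" using x by (auto intro: Kmult cf_in)
qed

lemma cf_zero: "s \<in> S \<Longrightarrow> cf 0 s = 0"
  by (rule cf_unique) (auto intro: K0)

definition nD :: "'a \<Rightarrow> real" where "nD d = (\<Sum>s\<in>S. av (cf d s))"

lemma nD_nonneg: "nD d \<ge> 0" unfolding nD_def by (auto intro!: sum_nonneg av_nonneg cf_in)

lemma av_cf_le: "s \<in> S \<Longrightarrow> av (cf d s) \<le> nD d"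
  unfolding nD_def using Sfin by (intro member_le_sum) (auto intro: av_nonneg cf_in)

lemma nD_zero[simp]: "nD 0 = 0" unfolding nD_def by (simp add: cf_zero av_zero_iff K0)

lemma nD_eq_0: "nD d = 0 \<longleftrightarrow> d = 0"
proof
  assume "nD d = 0"
  then have "\<forall>s\<in>S. av (cf d s) = 0" unfolding nD_def using Sfin
    by (subst (asm) sum_nonneg_eq_0_iff) (auto intro: av_nonneg cf_in)
  then have "\<forall>s\<in>S. cf d s = 0" using av_zero_iff cf_in by blast
  then show "d = 0" using cf_sum[of d] by simp
qed simp

lemma nD_pos: "d \<noteq> 0 \<Longrightarrow> nD d > 0" by (metis nD_eq_0 nD_nonneg less_eq_real_def)

lemma nD_add: "nD (d + e) \<le> nD d + nD e"
  unfolding nD_def by (auto simp: cf_add sum.distrib[symmetric] intro!: sum_mono av_add cf_in)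

lemma nD_diff: "nD (d - e) \<le> nD d + nD e"
  unfolding nD_def by (auto simp: cf_diff sum.distrib[symmetric] intro!: sum_mono av_diff cf_in)

lemma nD_smult: "x \<in> K \<Longrightarrow> nD (x * d) = av x * nD d"
  unfolding nD_def by (auto simp: cf_smult av_mult cf_in sum_distrib_left intro!: sum.cong)

lemma nD_uminus: "nD (- d) = nD d"
  using nD_smult[OF Kuminus[OF K1], of d] av_uminus[OF K1] av_one by simp

lemma nD_sum: "nD (sum f I) \<le> (\<Sum>i\<in>I. nD (f i))"
proof (induction I rule: infinite_finite_induct)
  case (insert x F)
  then show ?case using nD_add[of "f x" "sum f F"] by simp
qed auto

definition Bm :: real where "Bm = (\<Sum>s\<in>S. \<Sum>s'\<in>S. nD (s * s'))"

lemma Bm_nonneg: "Bm \<ge> 0" unfolding Bm_def by (auto intro!: sum_nonneg nD_nonneg)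

lemma nD_le_Bm: "s \<in> S \<Longrightarrow> s' \<in> S \<Longrightarrow> nD (s * s') \<le> Bm"
proof -
  assume a: "s \<in> S" "s' \<in> S"
  have "nD (s * s') \<le> (\<Sum>s'\<in>S. nD (s * s'))" using a Sfin by (intro member_le_sum) (auto intro: nD_nonneg)
  also have "\<dots> \<le> Bm" unfolding Bm_def using a Sfin
    by (intro member_le_sum[of _ _ "\<lambda>s. \<Sum>s'\<in>S. nD (s * s')"]) (auto intro: nD_nonneg sum_nonneg)
  finally show ?thesis .
qed

lemma nD_mult: "nD (d * e) \<le> Bm * nD d * nD e"
proof -
  have "d * e = (\<Sum>s\<in>S. cf d s * s) * (\<Sum>s'\<in>S. cf e s' * s')" using cf_sum by metis
  also have "\<dots> = (\<Sum>s\<in>S. \<Sum>s'\<in>S. (cf d s * cf e s') * (s * s'))"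
    unfolding sum_product
  proof (intro sum.cong refl)
    fix s s' assume "s \<in> S" "s' \<in> S"
    then have "s * cf e s' = cf e s' * s" using Kcomm[OF cf_in] by metis
    then show "cf d s * s * (cf e s' * s') = cf d s * cf e s' * (s * s')"
      by (metis mult.assoc)
  qed
  finally have de: "d * e = \<dots>" .
  have "nD (d * e) \<le> (\<Sum>s\<in>S. \<Sum>s'\<in>S. nD ((cf d s * cf e s') * (s * s')))"
    unfolding de by (rule order_trans[OF nD_sum]) (intro sum_mono nD_sum)
  also have "\<dots> = (\<Sum>s\<in>S. \<Sum>s'\<in>S. av (cf d s) * av (cf e s') * nD (s * s'))"
    by (intro sum.cong refl) (simp add: nD_smult Kmult cf_in av_mult)
  also have "\<dots> \<le> (\<Sum>s\<in>S. \<Sum>s'\<in>S. av (cf d s) * av (cf e s') * Bm)"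
    by (intro sum_mono mult_left_mono nD_le_Bm) (auto intro!: mult_nonneg_nonneg av_nonneg cf_in)
  also have "\<dots> = (\<Sum>s\<in>S. \<Sum>s'\<in>S. av (cf d s) * av (cf e s')) * Bm"
    by (simp add: sum_distrib_right)
  also have "\<dots> = Bm * nD d * nD e"
    unfolding nD_def by (simp add: sum_product)
  finally show ?thesis .
qed

end


context KB begin

definition nV :: "'a vec \<Rightarrow> real" where "nV v = (\<Sum>i<dim_vec v. nD (v $ i))"

lemma nV_nonneg: "nV v \<ge> 0" unfolding nV_def by (auto intro!: sum_nonneg nD_nonneg)

lemma nD_le_nV: "i < dim_vec v \<Longrightarrow> nD (v $ i) \<le> nV v"
  unfolding nV_def by (intro member_le_sum) (auto intro: nD_nonneg)

lemma nV_zero[simp]: "nV (0\<^sub>v n) = 0" unfolding nV_def by simp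

lemma nV_eq_0: "v \<in> carrier_vec n \<Longrightarrow> nV v = 0 \<longleftrightarrow> v = 0\<^sub>v n"
proof
  assume v: "v \<in> carrier_vec n" and "nV v = 0"
  then have "\<forall>i<n. nD (v $ i) = 0" unfolding nV_def
    by (subst (asm) sum_nonneg_eq_0_iff) (auto intro: nD_nonneg)
  then show "v = 0\<^sub>v n" using v by (intro eq_vecI) (auto simp: nD_eq_0)
qed simp

lemma nV_pos: "v \<in> carrier_vec n \<Longrightarrow> v \<noteq> 0\<^sub>v n \<Longrightarrow> nV v > 0"
  by (metis nV_eq_0 nV_nonneg less_eq_real_def)

lemma nV_add: "v \<in> carrier_vec n \<Longrightarrow> w \<in> carrier_vec n \<Longrightarrow> nV (v + w) \<le> nV v + nV w"
  unfolding nV_def by (auto simp: sum.distrib[symmetric] intro!: sum_mono nD_add)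

lemma nV_diff: "v \<in> carrier_vec n \<Longrightarrow> w \<in> carrier_vec n \<Longrightarrow> nV (v - w) \<le> nV v + nV w"
  unfolding nV_def by (auto simp: sum.distrib[symmetric] intro!: sum_mono nD_diff)

lemma nV_smult: "x \<in> K \<Longrightarrow> nV (x \<cdot>\<^sub>v v) = av x * nV v"
  unfolding nV_def by (auto simp: nD_smult sum_distrib_left)

lemma nV_uminus: "nV (- v) = nV v"
  unfolding nV_def by (auto simp: nD_uminus)

lemma nV_sym: "v \<in> carrier_vec n \<Longrightarrow> w \<in> carrier_vec n \<Longrightarrow> nV (v - w) = nV (w - v)"
proof -
  assume a: "v \<in> carrier_vec n" "w \<in> carrier_vec n"
  have "w - v = - (v - w)" using a by (intro eq_vecI) auto
  then show ?thesis by (simp add: nV_uminus)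
qed

lemma nV_tri: "v \<in> carrier_vec n \<Longrightarrow> w \<in> carrier_vec n \<Longrightarrow> nV v \<le> nV (v - w) + nV w"
proof -
  assume a: "v \<in> carrier_vec n" "w \<in> carrier_vec n"
  have "v = (v - w) + w" using a by (intro eq_vecI) auto
  then have "nV v = nV ((v - w) + w)" by simp
  also have "\<dots> \<le> nV (v - w) + nV w" using a by (intro nV_add[of _ n]) auto
  finally show ?thesis .
qed

definition mb :: "'a mat \<Rightarrow> real" where
  "mb M = Bm * (\<Sum>i<dim_row M. \<Sum>j<dim_col M. nD (M $$ (i, j)))"

lemma mb_nonneg: "mb M \<ge> 0" unfolding mb_def
  by (auto intro!: mult_nonneg_nonneg Bm_nonneg sum_nonneg nD_nonneg)

lemma nV_mat: assumes M: "M \<in> carrier_mat n n" and v: "v \<in> carrier_vec n"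
  shows "nV (M *\<^sub>v v) \<le> mb M * nV v"
proof -
  have "nV (M *\<^sub>v v) = (\<Sum>i<n. nD (\<Sum>j<n. M $$ (i, j) * v $ j))"
    unfolding nV_def using M v
    by (auto simp: scalar_prod_def atLeast0LessThan intro!: sum.cong)
  also have "\<dots> \<le> (\<Sum>i<n. \<Sum>j<n. Bm * nD (M $$ (i, j)) * nV v)"
  proof (intro sum_mono order_trans[OF nD_sum])
    fix i j assume "j \<in> {..<n}"
    then have "nD (v $ j) \<le> nV v" using v nD_le_nV by auto
    then have "Bm * nD (M $$ (i, j)) * nD (v $ j) \<le> Bm * nD (M $$ (i, j)) * nV v"
      by (intro mult_left_mono) (auto intro: mult_nonneg_nonneg Bm_nonneg nD_nonneg)
    then show "nD (M $$ (i, j) * v $ j) \<le> Bm * nD (M $$ (i, j)) * nV v"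
      using nD_mult[of "M $$ (i, j)" "v $ j"] by linarith
  qed
  also have "\<dots> = mb M * nV v" unfolding mb_def using M
    by (simp add: sum_distrib_left sum_distrib_right mult.assoc)
  finally show ?thesis .
qed

lemma mat_vec_smult: assumes M: "M \<in> carrier_mat n m" and v: "v \<in> carrier_vec m" and x: "x \<in> K"
  shows "M *\<^sub>v (x \<cdot>\<^sub>v v) = x \<cdot>\<^sub>v (M *\<^sub>v v)"
proof (rule eq_vecI)
  fix i assume "i < dim_vec (x \<cdot>\<^sub>v (M *\<^sub>v v))"
  then have i: "i < n" using M by auto
  have "(M *\<^sub>v (x \<cdot>\<^sub>v v)) $ i = (\<Sum>j<m. M $$ (i, j) * (x * v $ j))"
    using M v i by (auto simp: scalar_prod_def atLeast0LessThan intro!: sum.cong)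
  also have "\<dots> = (\<Sum>j<m. x * (M $$ (i, j) * v $ j))"
    by (intro sum.cong refl) (metis Kcomm x mult.assoc)
  also have "\<dots> = (x \<cdot>\<^sub>v (M *\<^sub>v v)) $ i"
    using M v i by (auto simp: scalar_prod_def atLeast0LessThan sum_distrib_left intro!: sum.cong)
  finally show "(M *\<^sub>v (x \<cdot>\<^sub>v v)) $ i = (x \<cdot>\<^sub>v (M *\<^sub>v v)) $ i" .
qed (use M in auto)

lemma smult_mat_vec: assumes M: "M \<in> carrier_mat n m" and v: "v \<in> carrier_vec m"
  shows "(x \<cdot>\<^sub>m M) *\<^sub>v v = x \<cdot>\<^sub>v (M *\<^sub>v v)"
  using M v by (intro eq_vecI) (auto simp: scalar_prod_def sum_distrib_left mult.assoc)

lemma mat_mult_smult: assumes M: "M \<in> carrier_mat n m" and N: "N \<in> carrier_mat m p" and x: "x \<in> K"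
  shows "M * (x \<cdot>\<^sub>m N) = x \<cdot>\<^sub>m (M * N)"
proof (rule eq_matI)
  fix i j assume ij: "i < dim_row (x \<cdot>\<^sub>m (M * N))" "j < dim_col (x \<cdot>\<^sub>m (M * N))"
  then show "(M * (x \<cdot>\<^sub>m N)) $$ (i, j) = (x \<cdot>\<^sub>m (M * N)) $$ (i, j)"
    using M N by (auto simp: scalar_prod_def sum_distrib_left intro!: sum.cong)
      (metis Kcomm x mult.assoc)
qed (use M N in auto)

lemma smult_mat_mult: assumes M: "M \<in> carrier_mat n m" and N: "N \<in> carrier_mat m p"
  shows "(x \<cdot>\<^sub>m M) * N = x \<cdot>\<^sub>m (M * N)"
  using M N by (intro eq_matI) (auto simp: scalar_prod_def sum_distrib_left mult.assoc)

end


context KB begin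

fun spn :: "nat \<Rightarrow> 'a vec list \<Rightarrow> 'a vec set" where
  "spn n [] = {0\<^sub>v n}"
| "spn n (f # fs) = {x \<cdot>\<^sub>v f + y | x y. x \<in> K \<and> y \<in> spn n fs}"

lemma spn_ConsI: "x \<in> K \<Longrightarrow> y \<in> spn n fs \<Longrightarrow> x \<cdot>\<^sub>v f + y \<in> spn n (f # fs)"
  by auto

lemma spn_carrier: "set fs \<subseteq> carrier_vec n \<Longrightarrow> spn n fs \<subseteq> carrier_vec n"
  by (induction fs) auto

lemma spn_zero: "set fs \<subseteq> carrier_vec n \<Longrightarrow> 0\<^sub>v n \<in> spn n fs"
proof (induction fs)
  case (Cons f fs)
  have e: "0\<^sub>v n = 0 \<cdot>\<^sub>v f + 0\<^sub>v n" using Cons by (intro eq_vecI) auto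
  show ?case by (subst e, rule spn_ConsI) (use Cons K0 in auto)
qed simp

lemma spn_add: "set fs \<subseteq> carrier_vec n \<Longrightarrow> u \<in> spn n fs \<Longrightarrow> w \<in> spn n fs \<Longrightarrow> u + w \<in> spn n fs"
proof (induction fs arbitrary: u w)
  case Nil then show ?case by auto
next
  case (Cons f fs)
  from Cons.prems obtain x y x' y' where u: "u = x \<cdot>\<^sub>v f + y" "x \<in> K" "y \<in> spn n fs"
    and w: "w = x' \<cdot>\<^sub>v f + y'" "x' \<in> K" "y' \<in> spn n fs" by auto
  have c: "y \<in> carrier_vec n" "y' \<in> carrier_vec n" "f \<in> carrier_vec n"
    using spn_carrier u w Cons.prems by auto
  have e: "u + w = (x + x') \<cdot>\<^sub>v f + (y + y')" using u w c
    by (intro eq_vecI) (auto simp: algebra_simps)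
  moreover have "y + y' \<in> spn n fs" using Cons u w by auto
  ultimately show ?case using u w Kadd spn_ConsI by metis
qed

lemma spn_smult: "set fs \<subseteq> carrier_vec n \<Longrightarrow> c \<in> K \<Longrightarrow> u \<in> spn n fs \<Longrightarrow> c \<cdot>\<^sub>v u \<in> spn n fs"
proof (induction fs arbitrary: u)
  case Nil then show ?case by auto
next
  case (Cons f fs)
  from Cons.prems obtain x y where u: "u = x \<cdot>\<^sub>v f + y" "x \<in> K" "y \<in> spn n fs" by auto
  have cy: "y \<in> carrier_vec n" "f \<in> carrier_vec n" using spn_carrier u Cons.prems by auto
  have e: "c \<cdot>\<^sub>v u = (c * x) \<cdot>\<^sub>v f + c \<cdot>\<^sub>v y" using u cy
    by (intro eq_vecI) (auto simp: algebra_simps)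
  show ?case by (subst e, rule spn_ConsI) (use Cons u Kmult in auto)
qed

lemma spn_uminus: "set fs \<subseteq> carrier_vec n \<Longrightarrow> u \<in> spn n fs \<Longrightarrow> - u \<in> spn n fs"
proof -
  assume a: "set fs \<subseteq> carrier_vec n" "u \<in> spn n fs"
  then have "- u = (- 1) \<cdot>\<^sub>v u" by (intro eq_vecI) auto
  then show ?thesis using spn_smult[OF a(1) Kuminus[OF K1] a(2)] by simp
qed

lemma spn_diff: "set fs \<subseteq> carrier_vec n \<Longrightarrow> u \<in> spn n fs \<Longrightarrow> w \<in> spn n fs \<Longrightarrow> u - w \<in> spn n fs"
proof -
  assume a: "set fs \<subseteq> carrier_vec n" "u \<in> spn n fs" "w \<in> spn n fs"
  then have c: "u \<in> carrier_vec n" "w \<in> carrier_vec n" using spn_carrier by auto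
  then have "u - w = u + (- w)" by (intro eq_vecI) auto
  then show ?thesis using spn_add[OF a(1) a(2) spn_uminus[OF a(1) a(3)]] by simp
qed

lemma spn_mono: "set (f # fs) \<subseteq> carrier_vec n \<Longrightarrow> u \<in> spn n fs \<Longrightarrow> u \<in> spn n (f # fs)"
proof -
  assume a: "set (f # fs) \<subseteq> carrier_vec n" "u \<in> spn n fs"
  then have "u = 0 \<cdot>\<^sub>v f + u" using spn_carrier[of fs n] by (intro eq_vecI) auto
  then show ?thesis using a K0 spn_ConsI by metis
qed

lemma spn_elem: "set fs \<subseteq> carrier_vec n \<Longrightarrow> f \<in> set fs \<Longrightarrow> f \<in> spn n fs"
proof (induction fs)
  case (Cons g fs)
  show ?case
  proof (cases "f = g")
    case True
    have "f = 1 \<cdot>\<^sub>v g + 0\<^sub>v n" using Cons True by (intro eq_vecI) auto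
    then show ?thesis using spn_zero[of fs n] Cons K1 spn_ConsI by (metis insert_subset list.simps(15))
  next
    case False
    then show ?thesis using Cons spn_mono by auto
  qed
qed simp

definition klin :: "nat \<Rightarrow> nat \<Rightarrow> ('a vec \<Rightarrow> 'a vec) \<Rightarrow> bool" where
  "klin n m L \<longleftrightarrow> (\<forall>v\<in>carrier_vec n. L v \<in> carrier_vec m) \<and>
     (\<forall>v\<in>carrier_vec n. \<forall>w\<in>carrier_vec n. L (v + w) = L v + L w) \<and>
     (\<forall>v\<in>carrier_vec n. \<forall>x\<in>K. L (x \<cdot>\<^sub>v v) = x \<cdot>\<^sub>v L v)"

lemma klin_zero: assumes "klin n m L" shows "L (0\<^sub>v n) = 0\<^sub>v m"
proof -
  have "0\<^sub>v n = 0 \<cdot>\<^sub>v (0\<^sub>v n :: 'a vec)" by (intro eq_vecI) auto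
  then have "L (0\<^sub>v n) = L (0 \<cdot>\<^sub>v 0\<^sub>v n)" by simp
  also have "\<dots> = 0 \<cdot>\<^sub>v L (0\<^sub>v n)" using assms K0 unfolding klin_def by auto
  also have "\<dots> = 0\<^sub>v m"
  proof -
    have "L (0\<^sub>v n) \<in> carrier_vec m" using assms unfolding klin_def by auto
    then show ?thesis by (intro eq_vecI) auto
  qed
  finally show ?thesis .
qed

lemma spn_map1: assumes L: "klin n m L" and fs: "set fs \<subseteq> carrier_vec n"
  shows "u \<in> spn n fs \<Longrightarrow> L u \<in> spn m (map L fs)"
  using fs
proof (induction fs arbitrary: u)
  case Nil then show ?case using klin_zero[OF L] by simp
next
  case (Cons f fs)
  from Cons.prems obtain x y where u: "u = x \<cdot>\<^sub>v f + y" "x \<in> K" "y \<in> spn n fs" by auto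
  have c: "y \<in> carrier_vec n" "f \<in> carrier_vec n" using spn_carrier u Cons.prems by auto
  have "L u = x \<cdot>\<^sub>v L f + L y" using L u c unfolding klin_def by auto
  then show ?case using Cons u by auto
qed

lemma spn_map2: assumes L: "klin n m L" and fs: "set fs \<subseteq> carrier_vec n"
  shows "w \<in> spn m (map L fs) \<Longrightarrow> \<exists>u\<in>spn n fs. w = L u"
  using fs
proof (induction fs arbitrary: w)
  case Nil then show ?case using klin_zero[OF L] by simp
next
  case (Cons f fs)
  from Cons.prems obtain x y where w: "w = x \<cdot>\<^sub>v L f + y" "x \<in> K" "y \<in> spn m (map L fs)" by auto
  obtain u where u: "u \<in> spn n fs" "y = L u" using Cons w by auto
  have c: "u \<in> carrier_vec n" "f \<in> carrier_vec n" using spn_carrier u Cons.prems by auto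
  have "L (x \<cdot>\<^sub>v f + u) = w" using L u c w unfolding klin_def by auto
  moreover have "x \<cdot>\<^sub>v f + u \<in> spn n (f # fs)" using u w by auto
  ultimately show ?case by metis
qed

lemma klin_mat: "M \<in> carrier_mat m n \<Longrightarrow> klin n m (\<lambda>v. M *\<^sub>v v)"
  unfolding klin_def by (auto simp: mult_add_distrib_mat_vec mat_vec_smult)

end


context KB begin

lemma dist_pos_aux:
  "length fl = N \<Longrightarrow> set fl \<subseteq> carrier_vec n \<Longrightarrow> g \<in> carrier_vec n \<Longrightarrow> g \<notin> spn n fl \<Longrightarrow>
   \<exists>c>0. \<forall>z\<in>spn n fl. c \<le> nV (g - z)"
proof (induction N arbitrary: fl g)
  case 0
  then have fl: "fl = []" by simp
  then have gz: "g \<noteq> 0\<^sub>v n" using 0 by auto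
  have "g - 0\<^sub>v n = g" using 0 by (intro eq_vecI) auto
  then show ?case using nV_pos[OF 0(3) gz] fl by auto
next
  case (Suc N)
  then obtain f fs where fl: "fl = f # fs" by (cases fl) auto
  have P: "set (f # fs) \<subseteq> carrier_vec n" "g \<in> carrier_vec n" "g \<notin> spn n (f # fs)"
    using Suc.prems fl by auto
  have lenfs: "length fs = N" using Suc.prems fl by simp
  have IH: "\<And>fs' g'. length fs' = N \<Longrightarrow> set fs' \<subseteq> carrier_vec n \<Longrightarrow> g' \<in> carrier_vec n \<Longrightarrow>
     g' \<notin> spn n fs' \<Longrightarrow> \<exists>c>0. \<forall>z\<in>spn n fs'. c \<le> nV (g' - z)" using Suc.IH by blast
  have "\<exists>c>0. \<forall>z\<in>spn n (f # fs). c \<le> nV (g - z)"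
  proof -
  have fC: "f \<in> carrier_vec n" and fsC: "set fs \<subseteq> carrier_vec n" using P by auto
  show ?thesis
  proof (cases "f = 0\<^sub>v n")
    case True
    have sub: "spn n (f # fs) \<subseteq> spn n fs"
    proof
      fix z assume "z \<in> spn n (f # fs)"
      then obtain x y where z: "z = x \<cdot>\<^sub>v f + y" "y \<in> spn n fs" by auto
      have "z = y" using z True spn_carrier[OF fsC] by (intro eq_vecI) auto
      then show "z \<in> spn n fs" using z by simp
    qed
    have "g \<notin> spn n fs" using P spn_mono by blast
    then obtain c where "c > 0" "\<forall>z\<in>spn n fs. c \<le> nV (g - z)" using IH[OF lenfs fsC] P by blast
    then show ?thesis using sub by blast
  next
    case False
    then obtain i where i: "i < n" "f $ i \<noteq> 0" using fC by (metis eq_vecI carrier_vecD index_zero_vec)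
    have "\<exists>s\<in>S. cf (f $ i) s \<noteq> 0"
    proof (rule ccontr)
      assume "\<not> ?thesis"
      then have "f $ i = 0" using cf_sum[of "f $ i"] by simp
      then show False using i by simp
    qed
    then obtain s where s: "s \<in> S" "cf (f $ i) s \<noteq> 0" by blast
    define lam where "lam v = cf (v $ i) s" for v
    define l where "l = lam f"
    have lK: "l \<in> K" "l \<noteq> 0" unfolding l_def lam_def using s cf_in by auto
    have lamK: "lam v \<in> K" for v unfolding lam_def using s cf_in by auto
    have lam_add: "lam (v + w) = lam v + lam w" if "v \<in> carrier_vec n" "w \<in> carrier_vec n" for v w
      unfolding lam_def using that i s by (simp add: cf_add)
    have lam_diff: "lam (v - w) = lam v - lam w" if "v \<in> carrier_vec n" "w \<in> carrier_vec n" for v w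
      unfolding lam_def using that i s by (simp add: cf_diff)
    have lam_sm: "lam (x \<cdot>\<^sub>v v) = x * lam v" if "v \<in> carrier_vec n" "x \<in> K" for v x
      unfolding lam_def using that i s by (simp add: cf_smult)
    have lam_le: "av (lam v) \<le> nV v" if "v \<in> carrier_vec n" for v
      unfolding lam_def using that i s av_cf_le[of s "v $ i"] nD_le_nV[of i v] by simp
    define prj where "prj v = v - (lam v * inverse l) \<cdot>\<^sub>v f" for v
    have prjC: "prj v \<in> carrier_vec n" if "v \<in> carrier_vec n" for v unfolding prj_def using that fC by auto
    have prj_add: "prj (v + w) = prj v + prj w" if "v \<in> carrier_vec n" "w \<in> carrier_vec n" for v w
      unfolding prj_def lam_add[OF that] using that fC by (intro eq_vecI) (auto simp: algebra_simps)
    have prj_diff: "prj (v - w) = prj v - prj w" if "v \<in> carrier_vec n" "w \<in> carrier_vec n" for v w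
      unfolding prj_def lam_diff[OF that] using that fC by (intro eq_vecI) (auto simp: algebra_simps)
    have prj_sm: "prj (x \<cdot>\<^sub>v v) = x \<cdot>\<^sub>v prj v" if "v \<in> carrier_vec n" "x \<in> K" for v x
      unfolding prj_def lam_sm[OF that] using that fC by (intro eq_vecI) (auto simp: algebra_simps)
    have klp: "klin n n prj" unfolding klin_def using prjC prj_add prj_sm by auto
    have prjf: "prj f = 0\<^sub>v n" unfolding prj_def using fC lK unfolding l_def[symmetric]
      by (intro eq_vecI) auto
    define Cp where "Cp = 1 + nV f / av l"
    have avl: "av l > 0" using lK av_zero_iff av_nonneg by (metis less_eq_real_def)
    have Cp_pos: "Cp > 0" unfolding Cp_def using avl nV_nonneg[of f] by (simp add: add_pos_nonneg)
    have prj_bound: "nV (prj v) \<le> Cp * nV v" if v: "v \<in> carrier_vec n" for v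
    proof -
      have "nV (prj v) \<le> nV v + nV ((lam v * inverse l) \<cdot>\<^sub>v f)"
        unfolding prj_def using v fC by (intro nV_diff) auto
      also have "nV ((lam v * inverse l) \<cdot>\<^sub>v f) = av (lam v) * (1 / av l) * nV f"
        using lK lamK by (simp add: nV_smult Kmult Kinv av_mult av_inverse)
      also have "\<dots> \<le> nV v * (1 / av l) * nV f"
        using lam_le[OF v] avl nV_nonneg[of f] by (intro mult_right_mono) auto
      finally show ?thesis unfolding Cp_def by (simp add: algebra_simps)
    qed
    let ?fs' = "map prj fs"
    have fs'C: "set ?fs' \<subseteq> carrier_vec n" using fsC prjC by auto
    have g'n: "prj g \<notin> spn n ?fs'"
    proof
      assume "prj g \<in> spn n ?fs'"
      then obtain y where y: "y \<in> spn n fs" "prj g = prj y" using spn_map2[OF klp fsC] by blast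
      have yC: "y \<in> carrier_vec n" using y spn_carrier[OF fsC] by auto
      have "g = ((lam g - lam y) * inverse l) \<cdot>\<^sub>v f + y"
      proof (rule eq_vecI)
        fix j assume j: "j < dim_vec (((lam g - lam y) * inverse l) \<cdot>\<^sub>v f + y)"
        then have jn: "j < n" using yC by auto
        have "(prj g) $ j = (prj y) $ j" using y by simp
        then have "g $ j - lam g * inverse l * f $ j = y $ j - lam y * inverse l * f $ j"
          unfolding prj_def using jn fC yC P by simp
        then show "g $ j = (((lam g - lam y) * inverse l) \<cdot>\<^sub>v f + y) $ j"
          using jn fC yC by (simp add: algebra_simps)
      qed (use yC P in auto)
      moreover have "(lam g - lam y) * inverse l \<in> K" using lamK lK by (auto intro: Kmult Kdiff Kinv)
      ultimately have "g \<in> spn n (f # fs)" using y spn_ConsI by metis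
      then show False using P by simp
    qed
    obtain c' where c': "c' > 0" "\<forall>z'\<in>spn n ?fs'. c' \<le> nV (prj g - z')"
      using IH[OF _ fs'C prjC[OF P(2)] g'n] lenfs by auto
    have "\<forall>z\<in>spn n (f # fs). c' / Cp \<le> nV (g - z)"
    proof
      fix z assume "z \<in> spn n (f # fs)"
      then obtain x y where z: "z = x \<cdot>\<^sub>v f + y" "x \<in> K" "y \<in> spn n fs" by auto
      have yC: "y \<in> carrier_vec n" using z spn_carrier[OF fsC] by auto
      have zC: "z \<in> carrier_vec n" using z yC fC by auto
      have "prj z = x \<cdot>\<^sub>v prj f + prj y" using z yC fC prj_add prj_sm by auto
      also have "\<dots> = prj y" unfolding prjf using prjC[OF yC] by (intro eq_vecI) auto
      finally have prjz: "prj z = prj y" .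
      have "c' \<le> nV (prj g - prj y)" using c' spn_map1[OF klp fsC z(3)] by auto
      also have "\<dots> = nV (prj (g - z))" using prj_diff[OF P(2) zC] prjz by simp
      also have "\<dots> \<le> Cp * nV (g - z)" using prj_bound P zC by auto
      finally show "c' / Cp \<le> nV (g - z)" using Cp_pos by (simp add: field_simps)
    qed
    then show ?thesis using c' Cp_pos by (intro exI[of _ "c' / Cp"]) auto
  qed
  qed
  then show ?case using fl by simp
qed

lemma dist_pos:
  "set fs \<subseteq> carrier_vec n \<Longrightarrow> g \<in> carrier_vec n \<Longrightarrow> g \<notin> spn n fs \<Longrightarrow>
   \<exists>c>0. \<forall>z\<in>spn n fs. c \<le> nV (g - z)"
  using dist_pos_aux by blast

end


context KB begin

lemma mat_vec_zero: "Q \<in> carrier_mat m n \<Longrightarrow> Q *\<^sub>v 0\<^sub>v n = 0\<^sub>v m"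
  by (intro eq_vecI) (auto simp: scalar_prod_def)

lemma ker_bound_aux:
  assumes R: "R \<in> carrier_mat n n" and Q: "Q \<in> carrier_mat n n"
  shows "set fs \<subseteq> carrier_vec n \<Longrightarrow> (\<forall>x\<in>spn n fs. R *\<^sub>v x = 0\<^sub>v n \<longrightarrow> Q *\<^sub>v x = 0\<^sub>v n) \<Longrightarrow>
    \<exists>c\<ge>0. \<forall>x\<in>spn n fs. nV (Q *\<^sub>v x) \<le> c * nV (R *\<^sub>v x)"
proof (induction fs)
  case Nil
  then show ?case using mat_vec_zero[OF Q] by auto
next
  case (Cons f fs)
  have fC: "f \<in> carrier_vec n" and fsC: "set fs \<subseteq> carrier_vec n" using Cons.prems by auto
  have "\<forall>x\<in>spn n fs. R *\<^sub>v x = 0\<^sub>v n \<longrightarrow> Q *\<^sub>v x = 0\<^sub>v n" using Cons.prems spn_mono by blast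
  then obtain c where c: "c \<ge> 0" "\<forall>x\<in>spn n fs. nV (Q *\<^sub>v x) \<le> c * nV (R *\<^sub>v x)"
    using Cons.IH fsC by blast
  have klR: "klin n n (\<lambda>v. R *\<^sub>v v)" using klin_mat[OF R] .
  let ?Rfs = "map (\<lambda>v. R *\<^sub>v v) fs"
  have RfsC: "set ?Rfs \<subseteq> carrier_vec n" using fsC R by auto
  show ?case
  proof (cases "R *\<^sub>v f \<in> spn n ?Rfs")
    case True
    then obtain y where y: "y \<in> spn n fs" "R *\<^sub>v f = R *\<^sub>v y" using spn_map2[OF klR fsC] by blast
    have yC: "y \<in> carrier_vec n" using y spn_carrier[OF fsC] by auto
    have "f - y \<in> spn n (f # fs)"
      using spn_diff[OF Cons.prems(1) spn_elem[OF Cons.prems(1)] spn_mono[OF Cons.prems(1) y(1)]] by simp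
    moreover have "R *\<^sub>v (f - y) = 0\<^sub>v n" using y fC yC R by (simp add: mult_minus_distrib_mat_vec)
    ultimately have "Q *\<^sub>v (f - y) = 0\<^sub>v n" using Cons.prems by blast
    then have "Q *\<^sub>v f - Q *\<^sub>v y = 0\<^sub>v n" using fC yC Q by (simp add: mult_minus_distrib_mat_vec)
    then have "\<forall>i<n. (Q *\<^sub>v f) $ i - (Q *\<^sub>v y) $ i = 0"
      by (metis Q carrier_matD(1) dim_mult_mat_vec index_minus_vec(1) index_zero_vec(1))
    then have Qfy: "Q *\<^sub>v f = Q *\<^sub>v y" using Q by (intro eq_vecI) auto
    have "\<forall>x\<in>spn n (f # fs). nV (Q *\<^sub>v x) \<le> c * nV (R *\<^sub>v x)"
    proof
      fix x assume "x \<in> spn n (f # fs)"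
      then obtain a y' where x: "x = a \<cdot>\<^sub>v f + y'" "a \<in> K" "y' \<in> spn n fs" by auto
      have y'C: "y' \<in> carrier_vec n" using x spn_carrier[OF fsC] by auto
      have x'in: "a \<cdot>\<^sub>v y + y' \<in> spn n fs" using spn_add[OF fsC spn_smult[OF fsC x(2) y(1)] x(3)] .
      have "R *\<^sub>v x = R *\<^sub>v (a \<cdot>\<^sub>v y + y')" using x fC yC y'C R y(2)
        by (simp add: mult_add_distrib_mat_vec mat_vec_smult)
      moreover have "Q *\<^sub>v x = Q *\<^sub>v (a \<cdot>\<^sub>v y + y')" using x fC yC y'C Q Qfy
        by (simp add: mult_add_distrib_mat_vec mat_vec_smult)
      ultimately show "nV (Q *\<^sub>v x) \<le> c * nV (R *\<^sub>v x)" using c x'in by simp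
    qed
    then show ?thesis using c by blast
  next
    case False
    obtain c1 where c1: "c1 > 0" "\<forall>z\<in>spn n ?Rfs. c1 \<le> nV (R *\<^sub>v f - z)"
      using dist_pos[OF RfsC _ False] R fC by auto
    define B where "B = nV (Q *\<^sub>v f) + c * nV (R *\<^sub>v f)"
    have B0: "B \<ge> 0" unfolding B_def using c nV_nonneg by auto
    have "\<forall>x\<in>spn n (f # fs). nV (Q *\<^sub>v x) \<le> (B / c1 + c) * nV (R *\<^sub>v x)"
    proof
      fix x assume "x \<in> spn n (f # fs)"
      then obtain a y' where x: "x = a \<cdot>\<^sub>v f + y'" "a \<in> K" "y' \<in> spn n fs" by auto
      have y'C: "y' \<in> carrier_vec n" using x spn_carrier[OF fsC] by auto
      have Rx: "R *\<^sub>v x = a \<cdot>\<^sub>v (R *\<^sub>v f) + R *\<^sub>v y'" using x fC y'C R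
        by (simp add: mult_add_distrib_mat_vec mat_vec_smult)
      have Qx: "Q *\<^sub>v x = a \<cdot>\<^sub>v (Q *\<^sub>v f) + Q *\<^sub>v y'" using x fC y'C Q
        by (simp add: mult_add_distrib_mat_vec mat_vec_smult)
      have RfC: "R *\<^sub>v f \<in> carrier_vec n" "R *\<^sub>v y' \<in> carrier_vec n" using R fC y'C by auto
      have QfC: "Q *\<^sub>v f \<in> carrier_vec n" "Q *\<^sub>v y' \<in> carrier_vec n" using Q fC y'C by auto
      have aa: "av a * c1 \<le> nV (R *\<^sub>v x)"
      proof (cases "a = 0")
        case True
        have "av 0 = 0" using av_zero_iff[OF K0] by simp
        then show ?thesis using True nV_nonneg[of "R *\<^sub>v x"] by simp
      next
        case False
        define z where "z = (- inverse a) \<cdot>\<^sub>v (R *\<^sub>v y')"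
        have zin: "z \<in> spn n ?Rfs" unfolding z_def
          by (rule spn_smult[OF RfsC]) (use x Kuminus Kinv spn_map1[OF klR fsC x(3)] in auto)
        have "R *\<^sub>v x = a \<cdot>\<^sub>v (R *\<^sub>v f - z)" unfolding Rx z_def using RfC False
          by (intro eq_vecI) (auto simp: algebra_simps mult.assoc[symmetric])
        then have "nV (R *\<^sub>v x) = av a * nV (R *\<^sub>v f - z)" using nV_smult x(2) by simp
        moreover have "c1 \<le> nV (R *\<^sub>v f - z)" using c1 zin by auto
        ultimately show ?thesis using av_nonneg[OF x(2)] by (simp add: mult_left_mono)
      qed
      have RxC: "R *\<^sub>v x \<in> carrier_vec n" using R by (simp add: carrier_vecI)
      have eqy: "R *\<^sub>v y' = R *\<^sub>v x - a \<cdot>\<^sub>v (R *\<^sub>v f)" unfolding Rx using RfC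
        by (intro eq_vecI) auto
      have "nV (R *\<^sub>v y') = nV (R *\<^sub>v x - a \<cdot>\<^sub>v (R *\<^sub>v f))" by (simp only: eqy)
      also have "\<dots> \<le> nV (R *\<^sub>v x) + nV (a \<cdot>\<^sub>v (R *\<^sub>v f))"
        by (rule nV_diff[OF RxC]) (use RfC in auto)
      finally have "nV (R *\<^sub>v y') \<le> nV (R *\<^sub>v x) + av a * nV (R *\<^sub>v f)"
        using nV_smult x(2) by simp
      moreover have "nV (Q *\<^sub>v x) \<le> av a * nV (Q *\<^sub>v f) + nV (Q *\<^sub>v y')"
        unfolding Qx using nV_add[of "a \<cdot>\<^sub>v (Q *\<^sub>v f)" n "Q *\<^sub>v y'"] QfC nV_smult x(2) by simp
      moreover have "nV (Q *\<^sub>v y') \<le> c * nV (R *\<^sub>v y')" using c x by auto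
      ultimately have "nV (Q *\<^sub>v x) \<le> av a * B + c * nV (R *\<^sub>v x)"
        unfolding B_def using c(1) by (smt (verit, best) mult_left_mono distrib_left mult.left_commute)
      moreover have "av a * B \<le> (nV (R *\<^sub>v x) / c1) * B"
        using aa c1 B0 by (intro mult_right_mono) (auto simp: field_simps)
      ultimately show "nV (Q *\<^sub>v x) \<le> (B / c1 + c) * nV (R *\<^sub>v x)"
        by (simp add: algebra_simps)
    qed
    then show ?thesis using B0 c1 c by (intro exI[of _ "B / c1 + c"]) auto
  qed
qed

lemma carrier_spn: "\<exists>fs. set fs \<subseteq> carrier_vec n \<and> carrier_vec n \<subseteq> spn n fs"
proof -
  obtain sl where sl: "set sl = S" using finite_list[OF Sfin] by blast
  define fs where "fs = concat (map (\<lambda>j. map (\<lambda>s. s \<cdot>\<^sub>v unit_vec n j) sl) [0..<n])"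
  have fsC: "set fs \<subseteq> carrier_vec n" unfolding fs_def by auto
  have single: "vec n (\<lambda>i. if i = j then (\<Sum>s\<in>T. k s * s) else 0) \<in> spn n fs"
    if "T \<subseteq> S" "j < n" "\<forall>s\<in>S. k s \<in> K" for T j k
  proof -
    have "finite T" using that Sfin finite_subset by blast
    then show ?thesis using that(1)
    proof (induction T rule: finite_induct)
      case empty
      have "vec n (\<lambda>i. if i = j then (\<Sum>s\<in>{}. k s * s) else 0) = 0\<^sub>v n" by (intro eq_vecI) auto
      then show ?case using spn_zero[OF fsC] by simp
    next
      case (insert s T)
      have sS: "s \<in> S" using insert by auto
      have el: "s \<cdot>\<^sub>v unit_vec n j \<in> spn n fs"
        by (rule spn_elem[OF fsC]) (use sS sl that(2) in \<open>auto simp: fs_def\<close>)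
      have "vec n (\<lambda>i. if i = j then (\<Sum>s\<in>insert s T. k s * s) else 0) =
            k s \<cdot>\<^sub>v (s \<cdot>\<^sub>v unit_vec n j) + vec n (\<lambda>i. if i = j then (\<Sum>s\<in>T. k s * s) else 0)"
        using insert by (intro eq_vecI) (auto simp: unit_vec_def mult.assoc)
      moreover have "k s \<cdot>\<^sub>v (s \<cdot>\<^sub>v unit_vec n j) \<in> spn n fs"
        using spn_smult[OF fsC _ el] that(3) sS by auto
      ultimately show ?case using spn_add[OF fsC] insert by auto
    qed
  qed
  have single2: "vec n (\<lambda>i. if i = j then d else 0) \<in> spn n fs" if "j < n" for j d
  proof -
    have e: "(\<Sum>s\<in>S. cf d s * s) = d" using cf_sum[of d] by simp
    have "vec n (\<lambda>i. if i = j then (\<Sum>s\<in>S. cf d s * s) else 0) \<in> spn n fs"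
      using single[OF order_refl that, of "cf d"] cf_in by auto
    then show ?thesis by (simp only: e)
  qed
  have "carrier_vec n \<subseteq> spn n fs"
  proof
    fix v :: "'a vec" assume v: "v \<in> carrier_vec n"
    have "m \<le> n \<Longrightarrow> vec n (\<lambda>i. if i < m then v $ i else 0) \<in> spn n fs" for m
    proof (induction m)
      case 0
      have "vec n (\<lambda>i. if i < 0 then v $ i else 0) = 0\<^sub>v n" by (intro eq_vecI) auto
      then show ?case using spn_zero[OF fsC] by simp
    next
      case (Suc m)
      have "vec n (\<lambda>i. if i < Suc m then v $ i else 0) =
            vec n (\<lambda>i. if i < m then v $ i else 0) + vec n (\<lambda>i. if i = m then v $ m else 0)"
        by (intro eq_vecI) auto
      then show ?case using spn_add[OF fsC] Suc single2[of m "v $ m"] by auto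
    qed
    from this[of n] have "vec n (\<lambda>i. if i < n then v $ i else 0) \<in> spn n fs" by simp
    moreover have "vec n (\<lambda>i. if i < n then v $ i else 0) = v" using v by (intro eq_vecI) auto
    ultimately show "v \<in> spn n fs" by simp
  qed
  then show ?thesis using fsC by blast
qed

lemma ker_bound:
  assumes R: "R \<in> carrier_mat n n" and Q: "Q \<in> carrier_mat n n"
    and ker: "\<forall>x\<in>carrier_vec n. R *\<^sub>v x = 0\<^sub>v n \<longrightarrow> Q *\<^sub>v x = 0\<^sub>v n"
  shows "\<exists>c\<ge>0. \<forall>x\<in>carrier_vec n. nV (Q *\<^sub>v x) \<le> c * nV (R *\<^sub>v x)"
proof -
  obtain fs where fs: "set fs \<subseteq> carrier_vec n" "carrier_vec n \<subseteq> spn n fs" using carrier_spn by blast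
  have "\<forall>x\<in>spn n fs. R *\<^sub>v x = 0\<^sub>v n \<longrightarrow> Q *\<^sub>v x = 0\<^sub>v n" using ker spn_carrier[OF fs(1)] by blast
  then show ?thesis using ker_bound_aux[OF R Q fs(1)] fs(2) by blast
qed

end


lemma equivclp_map:
  assumes "\<And>x y. r x y \<Longrightarrow> r' (f x) (f y)" "equivclp r a b"
  shows "equivclp r' (f a) (f b)"
  using assms(2)
proof (induction rule: equivclp_induct)
  case base then show ?case by simp
next
  case (step y z)
  then show ?case using assms(1) equivclp_into_equivclp by metis
qed

lemma step_ctx: "amalg_step n A C B u v \<Longrightarrow> amalg_step n A C B (p @ u @ s) (p @ v @ s)"
proof (induction rule: amalg_step.induct)
  case (mulA x y u v) then show ?case using amalg_step.mulA[of x A y n C B "p @ u" "v @ s"] by simp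
next
  case (mulB x y u v) then show ?case using amalg_step.mulB[of x B y n A C "p @ u" "v @ s"] by simp
next
  case (oneA u v) then show ?case using amalg_step.oneA[of n A C B "p @ u" "v @ s"] by simp
next
  case (oneB u v) then show ?case using amalg_step.oneB[of n A C B "p @ u" "v @ s"] by simp
next
  case (amal c u v) then show ?case using amalg_step.amal[of c C n A B "p @ u" "v @ s"] by simp
qed

lemma ae_ctx: "amalg_eq n A C B u v \<Longrightarrow> amalg_eq n A C B (p @ u @ s) (p @ v @ s)"
  unfolding amalg_eq_def by (rule equivclp_map[where f = "\<lambda>u. p @ u @ s"]) (auto intro: step_ctx)

lemma ae_refl: "amalg_eq n A C B u u" unfolding amalg_eq_def by simp
lemma ae_sym: "amalg_eq n A C B u v \<Longrightarrow> amalg_eq n A C B v u" unfolding amalg_eq_def by (rule equivclp_sym)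
lemma ae_trans: "amalg_eq n A C B u v \<Longrightarrow> amalg_eq n A C B v w \<Longrightarrow> amalg_eq n A C B u w"
  unfolding amalg_eq_def by (rule equivclp_trans)

lemma ae_step: "amalg_step n A C B u v \<Longrightarrow> amalg_eq n A C B u v" unfolding amalg_eq_def by blast

lemma aeA: "x \<in> A \<Longrightarrow> y \<in> A \<Longrightarrow> amalg_eq n A C B (Inl x # Inl y # v) (Inl (x * y) # v)"
  using ae_step[OF amalg_step.mulA[of x A y n C B "[]" v]] by simp
lemma aeB: "x \<in> B \<Longrightarrow> y \<in> B \<Longrightarrow> amalg_eq n A C B (Inr x # Inr y # v) (Inr (x * y) # v)"
  using ae_step[OF amalg_step.mulB[of x B y n A C "[]" v]] by simp
lemma aeC: "c \<in> C \<Longrightarrow> amalg_eq n A C B (Inl c # v) (Inr c # v)"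
  using ae_step[OF amalg_step.amal[of c C n A B "[]" v]] by simp
lemma aeC2: "c \<in> C \<Longrightarrow> amalg_eq n A C B (z # Inl c # v) (z # Inr c # v)"
  using ae_step[OF amalg_step.amal[of c C n A B "[z]" v]] by simp
lemma ae1A: "amalg_eq n A C B (Inl (1\<^sub>m n) # v) v"
  using ae_step[OF amalg_step.oneA[of n A C B "[]" v]] by simp
lemma ae1B: "amalg_eq n A C B (Inr (1\<^sub>m n) # v) v"
  using ae_step[OF amalg_step.oneB[of n A C B "[]" v]] by simp

lemma words_Cons: "x # w \<in> amalg_words A B \<longleftrightarrow> (case x of Inl a \<Rightarrow> a \<in> A | Inr b \<Rightarrow> b \<in> B) \<and> w \<in> amalg_words A B"
  unfolding amalg_words_def by auto
lemma words_append: "u @ w \<in> amalg_words A B \<longleftrightarrow> u \<in> amalg_words A B \<and> w \<in> amalg_words A B"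
  unfolding amalg_words_def by auto
lemma words_Nil[simp]: "[] \<in> amalg_words A B"
  unfolding amalg_words_def by auto

lemma eval_Nil[simp]: "eval_word n [] = 1\<^sub>m n" unfolding eval_word_def by simp
lemma eval_Cons: "eval_word n (x # w) = case_sum id id x * eval_word n w"
  unfolding eval_word_def by simp

lemma eval_carrier: "A \<subseteq> carrier_mat n n \<Longrightarrow> B \<subseteq> carrier_mat n n \<Longrightarrow> w \<in> amalg_words A B \<Longrightarrow>
  eval_word n w \<in> carrier_mat n n"
proof (induction w)
  case (Cons x w)
  then show ?case by (cases x) (auto simp: eval_Cons words_Cons)
qed simp

lemma eval_append:
  assumes "A \<subseteq> carrier_mat n n" "B \<subseteq> carrier_mat n n"
  shows "u \<in> amalg_words A B \<Longrightarrow> w \<in> amalg_words A B \<Longrightarrow> eval_word n (u @ w) = eval_word n u * eval_word n w"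
proof (induction u)
  case Nil
  have "eval_word n w \<in> carrier_mat n n" using eval_carrier[OF assms Nil(2)] .
  then show ?case by (simp add: left_mult_one_mat)
next
  case (Cons x u)
  have xc: "case_sum id id x \<in> carrier_mat n n" using Cons.prems assms by (cases x) (auto simp: words_Cons)
  have "eval_word n ((x # u) @ w) = case_sum id id x * (eval_word n u * eval_word n w)"
    using Cons by (simp add: eval_Cons words_Cons)
  also have "\<dots> = (case_sum id id x * eval_word n u) * eval_word n w"
  proof -
    have "u \<in> amalg_words A B" using Cons.prems by (simp add: words_Cons)
    then have "eval_word n u \<in> carrier_mat n n" "eval_word n w \<in> carrier_mat n n"
      using eval_carrier[OF assms] Cons.prems by auto
    then show ?thesis using xc by (simp add: assoc_mult_mat)
  qed
  finally show ?case by (simp add: eval_Cons)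
qed

definition ginv :: "nat \<Rightarrow> 'a::division_ring mat set \<Rightarrow> 'a mat \<Rightarrow> 'a mat" where
  "ginv n G g = (SOME g'. g' \<in> G \<and> g * g' = 1\<^sub>m n \<and> g' * g = 1\<^sub>m n)"

lemma ginv: "subgroup_GL n G \<Longrightarrow> g \<in> G \<Longrightarrow> ginv n G g \<in> G \<and> g * ginv n G g = 1\<^sub>m n \<and> ginv n G g * g = 1\<^sub>m n"
  unfolding ginv_def subgroup_GL_def by (rule someI_ex) blast

lemma sg_carrier: "subgroup_GL n G \<Longrightarrow> G \<subseteq> carrier_mat n n"
  unfolding subgroup_GL_def GL_mat_def by auto
lemma sg_one: "subgroup_GL n G \<Longrightarrow> 1\<^sub>m n \<in> G" unfolding subgroup_GL_def by auto
lemma sg_mult: "subgroup_GL n G \<Longrightarrow> g \<in> G \<Longrightarrow> h \<in> G \<Longrightarrow> g * h \<in> G" unfolding subgroup_GL_def by auto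

lemma fsg_sg: "finite_subgroup_GL n G \<Longrightarrow> subgroup_GL n G"
  unfolding finite_subgroup_GL_def subgroup_GL_def by auto

lemma inv_unique:
  fixes g :: "'a::division_ring mat"
  assumes "g \<in> carrier_mat n n" "a \<in> carrier_mat n n" "b \<in> carrier_mat n n" "a * g = 1\<^sub>m n" "g * b = 1\<^sub>m n"
  shows "a = b"
proof -
  have "a = a * (g * b)" using assms right_mult_one_mat[OF assms(2)] by simp
  also have "\<dots> = (a * g) * b" using assms(1-3) by (metis assoc_mult_mat)
  also have "\<dots> = b" using assms by (simp add: left_mult_one_mat)
  finally show ?thesis .
qed

lemma sg_inv_mem:
  assumes G: "subgroup_GL n G" and g: "g \<in> G" and a: "a \<in> carrier_mat n n" and ag: "a * g = 1\<^sub>m n"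
  shows "a \<in> G"
proof -
  have "a = ginv n G g" using inv_unique[of g n a "ginv n G g"] ginv[OF G g] sg_carrier[OF G] g a ag by auto
  then show ?thesis using ginv[OF G g] by simp
qed

lemma sg_cancel_left:
  assumes G: "subgroup_GL n G" and a: "a \<in> carrier_mat n n" and g: "g \<in> G" and ga: "g * a \<in> G"
  shows "a \<in> G"
proof -
  have gi: "ginv n G g \<in> carrier_mat n n" "g \<in> carrier_mat n n" using ginv[OF G g] sg_carrier[OF G] g by auto
  have "ginv n G g * (g * a) = (ginv n G g * g) * a" using gi a by (simp add: assoc_mult_mat)
  also have "\<dots> = a" using ginv[OF G g] a by (simp add: left_mult_one_mat)
  finally have "a = ginv n G g * (g * a)" by simp
  then show ?thesis using sg_mult[OF G] ginv[OF G g] ga by metis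
qed

lemma sg_cancel_right:
  assumes G: "subgroup_GL n G" and a: "a \<in> carrier_mat n n" and g: "g \<in> G" and ag: "a * g \<in> G"
  shows "a \<in> G"
proof -
  have gi: "ginv n G g \<in> carrier_mat n n" "g \<in> carrier_mat n n" using ginv[OF G g] sg_carrier[OF G] g by auto
  have "(a * g) * ginv n G g = a * (g * ginv n G g)" using gi a by (simp add: assoc_mult_mat)
  also have "\<dots> = a" using ginv[OF G g] a by (simp add: right_mult_one_mat)
  finally have "a = (a * g) * ginv n G g" by simp
  then show ?thesis using sg_mult[OF G] ginv[OF G g] ag by metis
qed


definition reduced :: "'a::division_ring mat set \<Rightarrow> 'a mat set \<Rightarrow> 'a mat set \<Rightarrow> ('a mat + 'a mat) list \<Rightarrow> bool" where
  "reduced A C B w \<longleftrightarrow> w \<in> amalg_words (A - C) (B - C) \<and> successively (\<lambda>x y. isl x \<noteq> isl y) w"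

lemma red_Nil[simp]: "reduced A C B []" unfolding reduced_def by simp

lemma red_Cons: "reduced A C B (x # r) \<longleftrightarrow> [x] \<in> amalg_words (A - C) (B - C) \<and> reduced A C B r \<and>
    (r \<noteq> [] \<longrightarrow> isl x \<noteq> isl (hd r))"
  unfolding reduced_def by (cases r) (auto simp: words_Cons)

lemma red_single: "[x] \<in> amalg_words (A - C) (B - C) \<Longrightarrow> reduced A C B [x]"
  by (simp add: red_Cons)

lemma red_replace: "reduced A C B (y # r) \<Longrightarrow> isl y' = isl y \<Longrightarrow> [y'] \<in> amalg_words (A - C) (B - C) \<Longrightarrow>
   reduced A C B (y' # r)"
  by (simp add: red_Cons)

locale AM =
  fixes n :: nat and A C B :: "'a::division_ring mat set"
  assumes sgA: "subgroup_GL n A" and sgB: "subgroup_GL n B" and sgC: "subgroup_GL n C"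
    and CA: "C \<subseteq> A" and CB: "C \<subseteq> B"
begin

lemma Acar: "A \<subseteq> carrier_mat n n" using sg_carrier[OF sgA] .
lemma Bcar: "B \<subseteq> carrier_mat n n" using sg_carrier[OF sgB] .
lemma Ccar: "C \<subseteq> carrier_mat n n" using sg_carrier[OF sgC] .

abbreviation W where "W \<equiv> amalg_words A B"
abbreviation ev where "ev \<equiv> eval_word n"
abbreviation ae where "ae \<equiv> amalg_eq n A C B"

lemma ev_app: "u \<in> W \<Longrightarrow> w \<in> W \<Longrightarrow> ev (u @ w) = ev u * ev w"
  using eval_append[OF Acar Bcar] by blast

lemma ev_car: "w \<in> W \<Longrightarrow> ev w \<in> carrier_mat n n"
  using eval_carrier[OF Acar Bcar] by blast

lemma step_we: "amalg_step n A C B u v \<Longrightarrow> (u \<in> W \<longleftrightarrow> v \<in> W) \<and> (u \<in> W \<longrightarrow> ev u = ev v)"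
proof (induction rule: amalg_step.induct)
  case (mulA x y u v)
  have xy: "x * y \<in> A" using sg_mult[OF sgA mulA.hyps] .
  have W: "(u @ [Inl x, Inl y] @ v \<in> W) = (u @ [Inl (x * y)] @ v \<in> W)"
    using mulA xy by (auto simp: words_append words_Cons)
  moreover have "ev (u @ [Inl x, Inl y] @ v) = ev (u @ [Inl (x * y)] @ v)" if "u @ [Inl x, Inl y] @ v \<in> W"
  proof -
    have uv: "u \<in> W" "v \<in> W" using that by (auto simp: words_append words_Cons)
    have c: "x \<in> carrier_mat n n" "y \<in> carrier_mat n n" "ev v \<in> carrier_mat n n"
      using mulA Acar ev_car[OF uv(2)] by auto
    have "ev (u @ [Inl x, Inl y] @ v) = ev u * (x * (y * ev v))"
      using ev_app uv mulA by (simp add: words_Cons eval_Cons)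
    moreover have "ev (u @ [Inl (x * y)] @ v) = ev u * ((x * y) * ev v)"
      using ev_app uv xy by (simp add: words_Cons eval_Cons)
    ultimately show ?thesis using c by (simp add: assoc_mult_mat)
  qed
  ultimately show ?case by blast
next
  case (mulB x y u v)
  have xy: "x * y \<in> B" using sg_mult[OF sgB mulB.hyps] .
  have W: "(u @ [Inr x, Inr y] @ v \<in> W) = (u @ [Inr (x * y)] @ v \<in> W)"
    using mulB xy by (auto simp: words_append words_Cons)
  moreover have "ev (u @ [Inr x, Inr y] @ v) = ev (u @ [Inr (x * y)] @ v)" if "u @ [Inr x, Inr y] @ v \<in> W"
  proof -
    have uv: "u \<in> W" "v \<in> W" using that by (auto simp: words_append words_Cons)
    have c: "x \<in> carrier_mat n n" "y \<in> carrier_mat n n" "ev v \<in> carrier_mat n n"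
      using mulB Bcar ev_car[OF uv(2)] by auto
    have "ev (u @ [Inr x, Inr y] @ v) = ev u * (x * (y * ev v))"
      using ev_app uv mulB by (simp add: words_Cons eval_Cons)
    moreover have "ev (u @ [Inr (x * y)] @ v) = ev u * ((x * y) * ev v)"
      using ev_app uv xy by (simp add: words_Cons eval_Cons)
    ultimately show ?thesis using c by (simp add: assoc_mult_mat)
  qed
  ultimately show ?case by blast
next
  case (oneA u v)
  have "(u @ [Inl (1\<^sub>m n)] @ v \<in> W) = (u @ v \<in> W)"
    using sg_one[OF sgA] by (auto simp: words_append words_Cons)
  moreover have "ev (u @ [Inl (1\<^sub>m n)] @ v) = ev (u @ v)" if "u @ [Inl (1\<^sub>m n)] @ v \<in> W"
  proof -
    have uv: "u \<in> W" "v \<in> W" using that by (auto simp: words_append words_Cons)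
    have "ev (u @ [Inl (1\<^sub>m n)] @ v) = ev u * (1\<^sub>m n * ev v)"
      using ev_app uv sg_one[OF sgA] by (simp add: words_Cons eval_Cons)
    then show ?thesis using ev_car[OF uv(2)] ev_app uv by (simp add: left_mult_one_mat)
  qed
  ultimately show ?case by blast
next
  case (oneB u v)
  have "(u @ [Inr (1\<^sub>m n)] @ v \<in> W) = (u @ v \<in> W)"
    using sg_one[OF sgB] by (auto simp: words_append words_Cons)
  moreover have "ev (u @ [Inr (1\<^sub>m n)] @ v) = ev (u @ v)" if "u @ [Inr (1\<^sub>m n)] @ v \<in> W"
  proof -
    have uv: "u \<in> W" "v \<in> W" using that by (auto simp: words_append words_Cons)
    have "ev (u @ [Inr (1\<^sub>m n)] @ v) = ev u * (1\<^sub>m n * ev v)"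
      using ev_app uv sg_one[OF sgB] by (simp add: words_Cons eval_Cons)
    then show ?thesis using ev_car[OF uv(2)] ev_app uv by (simp add: left_mult_one_mat)
  qed
  ultimately show ?case by blast
next
  case (amal c u v)
  have "(u @ [Inl c] @ v \<in> W) = (u @ [Inr c] @ v \<in> W)"
    using amal CA CB by (auto simp: words_append words_Cons)
  moreover have "ev (u @ [Inl c] @ v) = ev (u @ [Inr c] @ v)" if "u @ [Inl c] @ v \<in> W"
  proof -
    have uv: "u \<in> W" "v \<in> W" using that by (auto simp: words_append words_Cons)
    have "ev (u @ [Inl c] @ v) = ev u * (c * ev v)"
      using ev_app uv amal CA by (auto simp: words_Cons eval_Cons)
    moreover have "ev (u @ [Inr c] @ v) = ev u * (c * ev v)"
      using ev_app uv amal CB by (auto simp: words_Cons eval_Cons)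
    ultimately show ?thesis by simp
  qed
  ultimately show ?case by blast
qed

lemma ae_we: "ae u v \<Longrightarrow> u \<in> W \<Longrightarrow> v \<in> W \<and> ev u = ev v"
  unfolding amalg_eq_def
proof (induction rule: equivclp_induct)
  case base then show ?case by simp
next
  case (step y z)
  then show ?case using step_we by metis
qed

definition il :: "'a mat + 'a mat \<Rightarrow> 'a mat + 'a mat" where
  "il x = (case x of Inl a \<Rightarrow> Inl (ginv n A a) | Inr b \<Rightarrow> Inr (ginv n B b))"

definition invw :: "('a mat + 'a mat) list \<Rightarrow> ('a mat + 'a mat) list" where
  "invw w = rev (map il w)"

lemma invw_Cons: "invw (x # w) = invw w @ [il x]" unfolding invw_def by simp

lemma invw_W: "w \<in> W \<Longrightarrow> invw w \<in> W"
proof (induction w)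
  case (Cons x w)
  then show ?case using ginv[OF sgA] ginv[OF sgB]
    by (cases x) (auto simp: invw_Cons words_append words_Cons il_def)
qed (simp add: invw_def)

lemma letter_inv:
  assumes "[x] \<in> W"
  shows "case_sum id id (il x) * case_sum id id x = 1\<^sub>m n \<and> case_sum id id x * case_sum id id (il x) = 1\<^sub>m n
     \<and> case_sum id id x \<in> carrier_mat n n \<and> case_sum id id (il x) \<in> carrier_mat n n"
  using assms ginv[OF sgA] ginv[OF sgB] Acar Bcar by (cases x) (auto simp: il_def words_Cons)

lemma ev_invw: "w \<in> W \<Longrightarrow> ev (invw w) * ev w = 1\<^sub>m n \<and> ev w * ev (invw w) = 1\<^sub>m n"
proof (induction w)
  case Nil then show ?case by (simp add: invw_def)
next
  case (Cons x w)
  have xw: "[x] \<in> W" "w \<in> W" using Cons.prems by (auto simp: words_Cons)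
  let ?x = "case_sum id id x" and ?x' = "case_sum id id (il x)"
  have L: "?x' * ?x = 1\<^sub>m n" "?x * ?x' = 1\<^sub>m n" "?x \<in> carrier_mat n n" "?x' \<in> carrier_mat n n"
    using letter_inv[OF xw(1)] by auto
  have iw: "invw w \<in> W" using invw_W xw by simp
  have c: "ev w \<in> carrier_mat n n" "ev (invw w) \<in> carrier_mat n n" using ev_car xw iw by auto
  have e1: "ev (invw (x # w)) = ev (invw w) * ?x'"
    unfolding invw_Cons using ev_app[OF iw] invw_W[of "[x]"] xw L
    by (simp add: eval_Cons invw_def right_mult_one_mat)
  have e2: "ev (x # w) = ?x * ev w" by (simp add: eval_Cons)
  have h1: "?x' * (?x * ev w) = ev w"
    using assoc_mult_mat[OF L(4) L(3) c(1)] L(1) left_mult_one_mat[OF c(1)] by simp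
  have "ev (invw (x # w)) * ev (x # w) = ev (invw w) * ?x' * (?x * ev w)" using e1 e2 by simp
  also have "\<dots> = ev (invw w) * (?x' * (?x * ev w))"
    by (rule assoc_mult_mat[OF c(2) L(4) mult_carrier_mat[OF L(3) c(1)]])
  finally have A1: "ev (invw (x # w)) * ev (x # w) = 1\<^sub>m n" using Cons.IH[OF xw(2)] h1 by simp
  have h2: "ev w * (ev (invw w) * ?x') = ?x'"
    using assoc_mult_mat[OF c(1) c(2) L(4)] Cons.IH[OF xw(2)] left_mult_one_mat[OF L(4)] by simp
  have "ev (x # w) * ev (invw (x # w)) = ?x * ev w * (ev (invw w) * ?x')" using e1 e2 by simp
  also have "\<dots> = ?x * (ev w * (ev (invw w) * ?x'))"
    by (rule assoc_mult_mat[OF L(3) c(1) mult_carrier_mat[OF c(2) L(4)]])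
  finally have A2: "ev (x # w) * ev (invw (x # w)) = 1\<^sub>m n" using L(2) h2 by simp
  show ?case using A1 A2 by simp
qed

lemma ae_invw: "w \<in> W \<Longrightarrow> ae (invw w @ w) []"
proof (induction w)
  case Nil then show ?case by (simp add: invw_def ae_refl)
next
  case (Cons x w)
  have xw: "[x] \<in> W" "w \<in> W" using Cons.prems by (auto simp: words_Cons)
  have loc: "ae [il x, x] []"
  proof (cases x)
    case (Inl a)
    then have a: "a \<in> A" using xw by (simp add: words_Cons)
    have "ae [Inl (ginv n A a), Inl a] [Inl (ginv n A a * a)]"
      using aeA[of "ginv n A a" A a n C B "[]"] ginv[OF sgA a] a by simp
    then show ?thesis using ae1A[of n A C B "[]"] ginv[OF sgA a] Inl by (auto simp: il_def intro: ae_trans)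
  next
    case (Inr b)
    then have b: "b \<in> B" using xw by (simp add: words_Cons)
    have "ae [Inr (ginv n B b), Inr b] [Inr (ginv n B b * b)]"
      using aeB[of "ginv n B b" B b n A C "[]"] ginv[OF sgB b] b by simp
    then show ?thesis using ae1B[of n A C B "[]"] ginv[OF sgB b] Inr by (auto simp: il_def intro: ae_trans)
  qed
  have "ae (invw w @ [il x, x] @ w) (invw w @ [] @ w)" by (rule ae_ctx[OF loc])
  then have "ae (invw (x # w) @ (x # w)) (invw w @ w)" by (simp add: invw_Cons)
  then show ?case using Cons.IH[OF xw(2)] ae_trans by blast
qed

lemma gen_eq: "ev ` W = gen_subgroup n (A \<union> B)"
proof
  show "ev ` W \<subseteq> gen_subgroup n (A \<union> B)"
  proof
    fix g assume "g \<in> ev ` W"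
    then obtain w where w: "w \<in> W" "g = ev w" by blast
    have "ev w \<in> G" if G: "subgroup_GL n G" "A \<union> B \<subseteq> G" for G
      using w(1)
    proof (induction w)
      case Nil then show ?case using sg_one[OF G(1)] by simp
    next
      case (Cons x w)
      have "case_sum id id x \<in> G" using Cons.prems G(2) by (cases x) (auto simp: words_Cons)
      then show ?case using Cons sg_mult[OF G(1)] by (simp add: eval_Cons words_Cons)
    qed
    then show "g \<in> gen_subgroup n (A \<union> B)" unfolding gen_subgroup_def w(2) by blast
  qed
next
  have sg: "subgroup_GL n (ev ` W)" unfolding subgroup_GL_def
  proof (intro conjI ballI)
    show "ev ` W \<subseteq> GL_mat n"
    proof
      fix g assume "g \<in> ev ` W"
      then obtain w where w: "w \<in> W" "g = ev w" by blast
      then show "g \<in> GL_mat n" unfolding GL_mat_def using ev_invw[OF w(1)] ev_car invw_W by blast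
    qed
    show "1\<^sub>m n \<in> ev ` W" using words_Nil eval_Nil by (metis image_eqI)
    fix g h assume g: "g \<in> ev ` W"
    then obtain w where w: "w \<in> W" "g = ev w" by blast
    show "\<exists>g'\<in>ev ` W. g * g' = 1\<^sub>m n \<and> g' * g = 1\<^sub>m n"
      using ev_invw[OF w(1)] invw_W[OF w(1)] w by blast
    assume "h \<in> ev ` W"
    then obtain v where v: "v \<in> W" "h = ev v" by blast
    show "g * h \<in> ev ` W" using ev_app[OF w(1) v(1)] w v words_append by (metis image_eqI)
  qed
  have "A \<union> B \<subseteq> ev ` W"
  proof
    fix g assume g: "g \<in> A \<union> B"
    show "g \<in> ev ` W"
    proof (cases "g \<in> A")
      case True
      then have "[Inl g] \<in> W" "ev [Inl g] = g" using Acar by (auto simp: words_Cons eval_Cons right_mult_one_mat)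
      then show ?thesis by (metis image_eqI)
    next
      case False
      then have "[Inr g] \<in> W" "ev [Inr g] = g" using g Bcar by (auto simp: words_Cons eval_Cons right_mult_one_mat)
      then show ?thesis by (metis image_eqI)
    qed
  qed
  then show "gen_subgroup n (A \<union> B) \<subseteq> ev ` W" unfolding gen_subgroup_def using sg by blast
qed

end


context AM begin

abbreviation RW where "RW \<equiv> amalg_words (A - C) (B - C)"

definition NF :: "('a mat + 'a mat) list \<Rightarrow> bool" where
  "NF w \<longleftrightarrow> (\<exists>c\<in>C. w = [Inl c]) \<or> reduced A C B w"

lemma Cmul: "c \<in> C \<Longrightarrow> c' \<in> C \<Longrightarrow> c * c' \<in> C" using sg_mult[OF sgC] .

lemma mulC_right: "a \<in> carrier_mat n n \<Longrightarrow> c \<in> C \<Longrightarrow> a * c \<in> C \<Longrightarrow> a \<in> C"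
  using sg_cancel_right[OF sgC] by blast
lemma mulC_left: "a \<in> carrier_mat n n \<Longrightarrow> c \<in> C \<Longrightarrow> c * a \<in> C \<Longrightarrow> a \<in> C"
  using sg_cancel_left[OF sgC] by blast

lemma RW1: "[Inl a] \<in> RW \<longleftrightarrow> a \<in> A \<and> a \<notin> C" "[Inr b] \<in> RW \<longleftrightarrow> b \<in> B \<and> b \<notin> C"
  by (auto simp: words_Cons)

lemma nf_step:
  assumes x: "[x] \<in> W" and w: "NF w" and wW: "w \<in> W"
  shows "\<exists>w'. ae (x # w) w' \<and> NF w'"
proof -
  have Ac: "a \<in> A \<Longrightarrow> a \<in> carrier_mat n n" for a using Acar by auto
  have Bc: "b \<in> B \<Longrightarrow> b \<in> carrier_mat n n" for b using Bcar by auto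
  have CinA: "c \<in> C \<Longrightarrow> c \<in> A" and CinB: "c \<in> C \<Longrightarrow> c \<in> B" for c using CA CB by auto
  show ?thesis
  proof (cases "\<exists>c\<in>C. w = [Inl c]")
    case True
    then obtain c where c: "c \<in> C" "w = [Inl c]" by blast
    show ?thesis
    proof (cases x)
      case (Inl a)
      then have a: "a \<in> A" using x by (simp add: words_Cons)
      have ae1: "ae (x # w) [Inl (a * c)]" using aeA[of a A c n C B "[]"] a c CinA Inl by simp
      have "NF [Inl (a * c)]"
      proof (cases "a * c \<in> C")
        case True then show ?thesis unfolding NF_def by blast
      next
        case False
        have "a * c \<in> A" using sg_mult[OF sgA a CinA[OF c(1)]] .
        then show ?thesis unfolding NF_def using False by (auto intro!: red_single simp: words_Cons)
      qed
      then show ?thesis using ae1 by blast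
    next
      case (Inr b)
      then have b: "b \<in> B" using x by (simp add: words_Cons)
      have "ae (x # w) [Inr b, Inr c]" using aeC2[of c C n A B "Inr b" "[]"] c Inr by simp
      moreover have "ae [Inr b, Inr c] [Inr (b * c)]" using aeB[of b B c n A C "[]"] b CinB[OF c(1)] by simp
      ultimately have ae1: "ae (x # w) [Inr (b * c)]" using ae_trans by blast
      have bc: "b * c \<in> B" using sg_mult[OF sgB b CinB[OF c(1)]] .
      show ?thesis
      proof (cases "b * c \<in> C")
        case True
        have "ae [Inr (b * c)] [Inl (b * c)]" using ae_sym[OF aeC[of "b * c" C n A B "[]"]] True by simp
        then show ?thesis using ae1 ae_trans True unfolding NF_def by blast
      next
        case False
        then show ?thesis using ae1 bc unfolding NF_def by (auto intro!: red_single simp: words_Cons)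
      qed
    qed
  next
    case False
    then have red: "reduced A C B w" using w unfolding NF_def by blast
    show ?thesis
    proof (cases w)
      case Nil
      show ?thesis
      proof (cases x)
        case (Inl a)
        then have a: "a \<in> A" using x by (simp add: words_Cons)
        show ?thesis
        proof (cases "a \<in> C")
          case True then show ?thesis using Inl Nil ae_refl unfolding NF_def by blast
        next
          case False then show ?thesis using Inl Nil ae_refl a unfolding NF_def
            by (metis RW1(1) red_single)
        qed
      next
        case (Inr b)
        then have b: "b \<in> B" using x by (simp add: words_Cons)
        show ?thesis
        proof (cases "b \<in> C")
          case True
          have "ae [Inr b] [Inl b]" using ae_sym[OF aeC[of b C n A B "[]"]] True by simp
          then show ?thesis using Inr Nil True unfolding NF_def by blast
        next
          case False then show ?thesis using Inr Nil ae_refl b unfolding NF_def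
            by (metis RW1(2) red_single)
        qed
      qed
    next
      case (Cons y r)
      have redyr: "reduced A C B (y # r)" using red Cons by simp
      have yRW: "[y] \<in> RW" and rred: "reduced A C B r" and alt: "r \<noteq> [] \<longrightarrow> isl y \<noteq> isl (hd r)"
        using redyr by (auto simp: red_Cons)
      show ?thesis
      proof (cases x)
        case (Inl a)
        then have a: "a \<in> A" using x by (simp add: words_Cons)
        show ?thesis
        proof (cases y)
          case (Inl a')
          then have a': "a' \<in> A" "a' \<notin> C" using yRW by (auto simp: words_Cons)
          have aa: "a * a' \<in> A" using sg_mult[OF sgA a a'(1)] .
          have ae1: "ae (x # w) (Inl (a * a') # r)" using aeA[of a A a' n C B r] a a' Inl \<open>x = Inl a\<close> Cons by simp
          show ?thesis
          proof (cases "a * a' \<in> C")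
            case False
            have "reduced A C B (Inl (a * a') # r)" using red_replace[OF redyr] aa False Inl by (simp add: words_Cons)
            then show ?thesis using ae1 unfolding NF_def by blast
          next
            case True
            show ?thesis
            proof (cases r)
              case Nil then show ?thesis using ae1 True unfolding NF_def by blast
            next
              case (Cons z r')
              have "isl z = False" using alt Cons Inl by simp
              then obtain b where z: "z = Inr b" by (cases z) auto
              have b: "b \<in> B" "b \<notin> C" using rred Cons z by (auto simp: red_Cons words_Cons)
              have rr: "reduced A C B (Inr b # r')" using rred Cons z by simp
              have "ae (Inl (a * a') # Inr b # r') (Inr (a * a') # Inr b # r')" using aeC True by blast
              moreover have "ae (Inr (a * a') # Inr b # r') (Inr (a * a' * b) # r')"
                using aeB[of "a * a'" B b] CinB[OF True] b by blast
              ultimately have ae2: "ae (x # w) (Inr (a * a' * b) # r')"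
                using ae1 Cons z ae_trans by blast
              have "a * a' * b \<notin> C" using mulC_left[OF Bc[OF b(1)] True] b(2)
                using assoc_mult_mat Ac Bc a a'(1) b(1) by metis
              moreover have "a * a' * b \<in> B" using sg_mult[OF sgB CinB[OF True] b(1)] .
              ultimately have "reduced A C B (Inr (a * a' * b) # r')"
                using red_replace[OF rr] by (simp add: words_Cons)
              then show ?thesis using ae2 unfolding NF_def by blast
            qed
          qed
        next
          case (Inr b)
          then have b: "b \<in> B" "b \<notin> C" using yRW by (auto simp: words_Cons)
          show ?thesis
          proof (cases "a \<in> C")
            case False
            have "reduced A C B (x # w)" using redyr Cons Inl Inr a False by (simp add: red_Cons words_Cons)
            then show ?thesis using ae_refl unfolding NF_def by blast
          next
            case True
            have "ae (x # w) (Inr a # Inr b # r)" using aeC[of a C n A B] True Inl Inr Cons by simp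
            moreover have "ae (Inr a # Inr b # r) (Inr (a * b) # r)" using aeB[of a B b] CinB[OF True] b by blast
            ultimately have ae1: "ae (x # w) (Inr (a * b) # r)" using ae_trans by blast
            have "a * b \<notin> C" using mulC_left[OF Bc[OF b(1)] True] b(2) by blast
            moreover have "a * b \<in> B" using sg_mult[OF sgB CinB[OF True] b(1)] .
            ultimately have "reduced A C B (Inr (a * b) # r)"
              using red_replace[OF redyr] Inr by (simp add: words_Cons)
            then show ?thesis using ae1 unfolding NF_def by blast
          qed
        qed
      next
        case (Inr b)
        then have b: "b \<in> B" using x by (simp add: words_Cons)
        show ?thesis
        proof (cases y)
          case (Inr b')
          then have b': "b' \<in> B" "b' \<notin> C" using yRW by (auto simp: words_Cons)
          have bb: "b * b' \<in> B" using sg_mult[OF sgB b b'(1)] .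
          have ae1: "ae (x # w) (Inr (b * b') # r)" using aeB[of b B b' n A C r] b b' Inr \<open>x = Inr b\<close> Cons by simp
          show ?thesis
          proof (cases "b * b' \<in> C")
            case False
            have "reduced A C B (Inr (b * b') # r)" using red_replace[OF redyr] bb False Inr by (simp add: words_Cons)
            then show ?thesis using ae1 unfolding NF_def by blast
          next
            case True
            show ?thesis
            proof (cases r)
              case Nil
              have "ae [Inr (b * b')] [Inl (b * b')]" using ae_sym[OF aeC[of "b * b'" C n A B "[]"]] True by simp
              then show ?thesis using ae1 True Nil ae_trans unfolding NF_def by blast
            next
              case (Cons z r')
              have "isl z = True" using alt Cons Inr by simp
              then obtain a where z: "z = Inl a" by (cases z) auto
              have a: "a \<in> A" "a \<notin> C" using rred Cons z by (auto simp: red_Cons words_Cons)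
              have rr: "reduced A C B (Inl a # r')" using rred Cons z by simp
              have "ae (Inr (b * b') # Inl a # r') (Inl (b * b') # Inl a # r')" using ae_sym[OF aeC] True by blast
              moreover have "ae (Inl (b * b') # Inl a # r') (Inl (b * b' * a) # r')"
                using aeA[of "b * b'" A a] CinA[OF True] a by blast
              ultimately have ae2: "ae (x # w) (Inl (b * b' * a) # r')"
                using ae1 Cons z ae_trans by blast
              have "b * b' * a \<notin> C" using mulC_left[OF Ac[OF a(1)] True] a(2) by blast
              moreover have "b * b' * a \<in> A" using sg_mult[OF sgA CinA[OF True] a(1)] .
              ultimately have "reduced A C B (Inl (b * b' * a) # r')"
                using red_replace[OF rr] by (simp add: words_Cons)
              then show ?thesis using ae2 unfolding NF_def by blast
            qed
          qed
        next
          case (Inl a)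
          then have a: "a \<in> A" "a \<notin> C" using yRW by (auto simp: words_Cons)
          show ?thesis
          proof (cases "b \<in> C")
            case False
            have "reduced A C B (x # w)" using redyr Cons Inl Inr b False by (simp add: red_Cons words_Cons)
            then show ?thesis using ae_refl unfolding NF_def by blast
          next
            case True
            have "ae (x # w) (Inl b # Inl a # r)" using ae_sym[OF aeC[of b C n A B]] True Inl Inr Cons by simp
            moreover have "ae (Inl b # Inl a # r) (Inl (b * a) # r)" using aeA[of b A a] CinA[OF True] a by blast
            ultimately have ae1: "ae (x # w) (Inl (b * a) # r)" using ae_trans by blast
            have "b * a \<notin> C" using mulC_left[OF Ac[OF a(1)] True] a(2) by blast
            moreover have "b * a \<in> A" using sg_mult[OF sgA CinA[OF True] a(1)] .
            ultimately have "reduced A C B (Inl (b * a) # r)"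
              using red_replace[OF redyr] Inl by (simp add: words_Cons)
            then show ?thesis using ae1 unfolding NF_def by blast
          qed
        qed
      qed
    qed
  qed
qed

lemma NF_W: "NF w \<Longrightarrow> w \<in> W"
  unfolding NF_def reduced_def amalg_words_def using CA by (force split: sum.splits)

lemma normalize: "w \<in> W \<Longrightarrow> \<exists>w'. ae w w' \<and> NF w'"
proof (induction w)
  case Nil then show ?case using ae_refl unfolding NF_def by fastforce
next
  case (Cons x w)
  have xw: "[x] \<in> W" "w \<in> W" using Cons.prems by (auto simp: words_Cons)
  obtain w' where w': "ae w w'" "NF w'" using Cons.IH xw by blast
  have "ae ([x] @ w @ []) ([x] @ w' @ [])" using ae_ctx[OF w'(1)] .
  then have a1: "ae (x # w) (x # w')" by simp
  obtain w'' where "ae (x # w') w''" "NF w''" using nf_step[OF xw(1) w'(2) NF_W[OF w'(2)]] by blast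
  then show ?case using a1 ae_trans by blast
qed

theorem canonical_from_pp:
  assumes pp: "\<And>w. reduced A C B w \<Longrightarrow> w \<noteq> [] \<Longrightarrow> ev w \<noteq> 1\<^sub>m n"
  shows "amalg_canonical_iso n A C B"
proof -
  have triv: "ae w []" if w: "w \<in> W" and e: "ev w = 1\<^sub>m n" for w
  proof -
    obtain w' where w': "ae w w'" "NF w'" using normalize[OF w] by blast
    have "ev w' = 1\<^sub>m n" using ae_we[OF w'(1) w] e by simp
    then have "w' = [] \<or> (\<exists>c\<in>C. w' = [Inl c] \<and> c = 1\<^sub>m n)"
      using w'(2) pp unfolding NF_def using Ccar
      by (auto simp: eval_Cons right_mult_one_mat)
    moreover have "ae [Inl (1\<^sub>m n)] []" using ae1A[of n A C B "[]"] by simp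
    ultimately show ?thesis using w'(1) ae_trans by blast
  qed
  have "ev w1 = ev w2 \<longleftrightarrow> ae w1 w2" if w: "w1 \<in> W" "w2 \<in> W" for w1 w2
  proof
    assume "ae w1 w2" then show "ev w1 = ev w2" using ae_we w by blast
  next
    assume e: "ev w1 = ev w2"
    have iw: "invw w2 \<in> W" using invw_W w by simp
    have "ev (w1 @ invw w2) = ev w1 * ev (invw w2)" using ev_app w iw by simp
    also have "\<dots> = 1\<^sub>m n" using e ev_invw[OF w(2)] by simp
    finally have "ae (w1 @ invw w2) []" using triv[of "w1 @ invw w2"] w iw words_append by blast
    then have "ae ([] @ (w1 @ invw w2) @ w2) ([] @ [] @ w2)" by (rule ae_ctx)
    then have a1: "ae (w1 @ invw w2 @ w2) w2" by simp
    have "ae (w1 @ (invw w2 @ w2) @ []) (w1 @ [] @ [])" using ae_ctx[OF ae_invw[OF w(2)]] .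
    then have "ae (w1 @ invw w2 @ w2) w1" by simp
    then show "ae w1 w2" using a1 ae_sym ae_trans by blast
  qed
  then show ?thesis unfolding amalg_canonical_iso_def using gen_eq by blast
qed

end


locale DEF = KB K av S for K :: "'a::division_ring set" and av S +
  fixes n :: nat and A H C :: "'a mat set" and \<delta> :: "'a mat \<Rightarrow> 'a mat"
  assumes fA: "finite_subgroup_GL n A" and fH: "finite_subgroup_GL n H"
    and Cdef: "C = A \<inter> H"
    and fod: "first_order_deformation n H \<delta>"
    and ch0: "char_zero_ring TYPE('a)"
    and ker0: "\<forall>g\<in>H. \<delta> g = 0\<^sub>m n n \<longleftrightarrow> g \<in> C"
    and iik: "\<forall>a\<in>A - C. \<forall>h\<in>H - C. \<forall>h'\<in>H - C.
           ((\<lambda>w. a *\<^sub>v w) ` mat_im n (\<delta> h)) \<inter> mat_ker n (\<delta> h') = {0\<^sub>v n}"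
begin

lemma sgA: "subgroup_GL n A" using fsg_sg[OF fA] .
lemma sgH: "subgroup_GL n H" using fsg_sg[OF fH] .
lemma finA: "finite A" using fA unfolding finite_subgroup_GL_def by auto
lemma finH: "finite H" using fH unfolding finite_subgroup_GL_def by auto
lemma Acar: "A \<subseteq> carrier_mat n n" using sg_carrier[OF sgA] .
lemma Hcar: "H \<subseteq> carrier_mat n n" using sg_carrier[OF sgH] .

lemma sgC: "subgroup_GL n C"
  unfolding subgroup_GL_def
proof (intro conjI ballI)
  show "C \<subseteq> GL_mat n" using sgA Cdef unfolding subgroup_GL_def by auto
  show "1\<^sub>m n \<in> C" using sg_one[OF sgA] sg_one[OF sgH] Cdef by auto
  fix g h assume g: "g \<in> C"
  then have gA: "g \<in> A" and gH: "g \<in> H" using Cdef by auto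
  have "ginv n A g = ginv n H g"
    using inv_unique[of g n "ginv n A g" "ginv n H g"] ginv[OF sgA gA] ginv[OF sgH gH] Acar Hcar gA by auto
  then have "ginv n A g \<in> C" using ginv[OF sgA gA] ginv[OF sgH gH] Cdef by auto
  then show "\<exists>g'\<in>C. g * g' = 1\<^sub>m n \<and> g' * g = 1\<^sub>m n" using ginv[OF sgA gA] by blast
  assume "h \<in> C"
  then show "g * h \<in> C" using g sg_mult[OF sgA] sg_mult[OF sgH] Cdef by auto
qed

lemma CA: "C \<subseteq> A" and CH: "C \<subseteq> H" using Cdef by auto

lemma dcar: "h \<in> H \<Longrightarrow> \<delta> h \<in> carrier_mat n n" using fod unfolding first_order_deformation_def by auto
lemma dmul: "h \<in> H \<Longrightarrow> k \<in> H \<Longrightarrow> \<delta> (h * k) = \<delta> h * k + h * \<delta> k"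
  using fod unfolding first_order_deformation_def by auto
lemma dsq: "h \<in> H \<Longrightarrow> k \<in> H \<Longrightarrow> \<delta> h * \<delta> k = 0\<^sub>m n n"
  using fod unfolding first_order_deformation_def by auto
lemma dC: "c \<in> C \<Longrightarrow> \<delta> c = 0\<^sub>m n n" using ker0 CH by auto
lemma dnC: "h \<in> H \<Longrightarrow> h \<notin> C \<Longrightarrow> \<delta> h \<noteq> 0\<^sub>m n n" using ker0 by auto

definition phi :: "'a \<Rightarrow> 'a mat \<Rightarrow> 'a mat" where "phi t h = deform \<delta> t h"

lemma phi_def': "phi t h = h + t \<cdot>\<^sub>m \<delta> h" unfolding phi_def deform_def ..

lemma phi_car: "h \<in> H \<Longrightarrow> phi t h \<in> carrier_mat n n"
  unfolding phi_def' using Hcar dcar by auto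

lemma phi_C: "c \<in> C \<Longrightarrow> phi t c = c"
  unfolding phi_def' using dC[of c] CH Hcar by (intro eq_matI) auto

lemma phi_one: "phi t (1\<^sub>m n) = 1\<^sub>m n" using phi_C sgC sg_one by blast

lemma phi_mult: assumes t: "t \<in> K" and h: "h \<in> H" and k: "k \<in> H"
  shows "phi t (h * k) = phi t h * phi t k"
proof -
  have c: "h \<in> carrier_mat n n" "k \<in> carrier_mat n n" "\<delta> h \<in> carrier_mat n n" "\<delta> k \<in> carrier_mat n n"
    using h k Hcar dcar by auto
  have "phi t h * phi t k = h * (k + t \<cdot>\<^sub>m \<delta> k) + t \<cdot>\<^sub>m \<delta> h * (k + t \<cdot>\<^sub>m \<delta> k)"
    unfolding phi_def' by (rule add_mult_distrib_mat) (use c in auto)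
  also have "\<dots> = (h * k + t \<cdot>\<^sub>m (h * \<delta> k)) + (t \<cdot>\<^sub>m (\<delta> h * k) + t \<cdot>\<^sub>m (t \<cdot>\<^sub>m (\<delta> h * \<delta> k)))"
  proof -
    have e1: "t \<cdot>\<^sub>m \<delta> h * (t \<cdot>\<^sub>m \<delta> k) = t \<cdot>\<^sub>m (t \<cdot>\<^sub>m (\<delta> h * \<delta> k))"
      using smult_mat_mult[OF c(3) smult_carrier_mat[OF c(4)]] mat_mult_smult[OF c(3) c(4) t] by simp
    have e2: "h * (t \<cdot>\<^sub>m \<delta> k) = t \<cdot>\<^sub>m (h * \<delta> k)" using mat_mult_smult[OF c(1) c(4) t] .
    have e3: "t \<cdot>\<^sub>m \<delta> h * k = t \<cdot>\<^sub>m (\<delta> h * k)" using smult_mat_mult[OF c(3) c(2)] .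
    show ?thesis
      using mult_add_distrib_mat[OF c(1) c(2) smult_carrier_mat[OF c(4)]]
        mult_add_distrib_mat[OF smult_carrier_mat[OF c(3)] c(2) smult_carrier_mat[OF c(4)]] e1 e2 e3
      by simp
  qed
  also have "\<dots> = h * k + t \<cdot>\<^sub>m (\<delta> h * k + h * \<delta> k)"
    unfolding dsq[OF h k] using c by (intro eq_matI) (auto simp: algebra_simps)
  also have "\<dots> = phi t (h * k)" unfolding phi_def' dmul[OF h k] ..
  finally show ?thesis by simp
qed

lemma phi_ginv: assumes t: "t \<in> K" and h: "h \<in> H"
  shows "phi t h * phi t (ginv n H h) = 1\<^sub>m n" "phi t (ginv n H h) * phi t h = 1\<^sub>m n"
  using phi_mult[OF t h, of "ginv n H h"] phi_mult[OF t _ h, of "ginv n H h"] ginv[OF sgH h] phi_one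
  by auto

lemma gp_H: "g \<in> H \<Longrightarrow> (g ^\<^sub>m m) \<in> H"
proof (induction m)
  case 0 then show ?case using sg_one[OF sgH] Hcar by auto
next
  case (Suc m) then show ?case using sg_mult[OF sgH] by simp
qed

lemma ofnat_K: "(of_nat m :: 'a) \<in> K"
  by (induction m) (auto simp: K0 K1 Kadd)

lemma phi_inj: assumes t: "t \<in> K" "t \<noteq> 0" and h: "h \<in> H" and k: "k \<in> H" and e: "phi t h = phi t k"
  shows "h = k"
proof -
  define g where "g = h * ginv n H k"
  have gH: "g \<in> H" unfolding g_def using sg_mult[OF sgH h] ginv[OF sgH k] by blast
  have gc: "g \<in> carrier_mat n n" using gH Hcar by auto
  have "phi t g = phi t h * phi t (ginv n H k)" unfolding g_def using phi_mult t h ginv[OF sgH k] by blast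
  then have pg: "phi t g = 1\<^sub>m n" using e phi_ginv[OF t(1) k] by simp
  have "g \<in> C"
  proof (rule ccontr)
    assume gC: "g \<notin> C"
    define E where "E = (- t) \<cdot>\<^sub>m \<delta> g"
    have Ec: "E \<in> carrier_mat n n" unfolding E_def using dcar[OF gH] by simp
    have g1E: "g = 1\<^sub>m n + E"
    proof (rule eq_matI)
      fix i j assume "i < dim_row (1\<^sub>m n + E)" "j < dim_col (1\<^sub>m n + E)"
      then have ij: "i < n" "j < n" using Ec by auto
      then have "(phi t g) $$ (i, j) = (1\<^sub>m n) $$ (i, j)" using pg by simp
      then show "g $$ (i, j) = (1\<^sub>m n + E) $$ (i, j)"
        unfolding phi_def' E_def using ij gc dcar[OF gH] by (auto simp: algebra_simps)
    qed (use gc Ec in auto)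
    have EE: "E * E = 0\<^sub>m n n"
    proof -
      have mt: "- t \<in> K" using Kuminus t by blast
      have dg: "\<delta> g \<in> carrier_mat n n" using dcar[OF gH] .
      show ?thesis unfolding E_def
        using smult_mat_mult[OF dg smult_carrier_mat[OF dg]] mat_mult_smult[OF dg dg mt] dsq[OF gH gH]
        by simp
    qed
    have pw: "g ^\<^sub>m m = 1\<^sub>m n + of_nat m \<cdot>\<^sub>m E" for m
    proof (induction m)
      case 0 then show ?case using Ec gc by (intro eq_matI) auto
    next
      case (Suc m)
      have "g ^\<^sub>m Suc m = (1\<^sub>m n + of_nat m \<cdot>\<^sub>m E) * (1\<^sub>m n + E)" using Suc g1E by simp
      also have "\<dots> = (1\<^sub>m n + E) + (of_nat m \<cdot>\<^sub>m E + of_nat m \<cdot>\<^sub>m (E * E))"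
      proof -
        have mE: "of_nat m \<cdot>\<^sub>m E \<in> carrier_mat n n" using Ec by simp
        have "(1\<^sub>m n + of_nat m \<cdot>\<^sub>m E) * (1\<^sub>m n + E) = 1\<^sub>m n * (1\<^sub>m n + E) + of_nat m \<cdot>\<^sub>m E * (1\<^sub>m n + E)"
          by (rule add_mult_distrib_mat) (use Ec in auto)
        also have "of_nat m \<cdot>\<^sub>m E * (1\<^sub>m n + E) = of_nat m \<cdot>\<^sub>m E * 1\<^sub>m n + of_nat m \<cdot>\<^sub>m E * E"
          by (rule mult_add_distrib_mat[OF mE]) (use Ec in auto)
        also have "of_nat m \<cdot>\<^sub>m E * E = of_nat m \<cdot>\<^sub>m (E * E)" using smult_mat_mult[OF Ec Ec] .
        finally show ?thesis using Ec mE by (simp add: left_mult_one_mat right_mult_one_mat)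
      qed
      also have "\<dots> = 1\<^sub>m n + of_nat (Suc m) \<cdot>\<^sub>m E"
        unfolding EE using Ec by (intro eq_matI) (auto simp: algebra_simps)
      finally show ?case .
    qed
    have "\<delta> g \<noteq> 0\<^sub>m n n" using dnC gH gC by blast
    then obtain i j where ij: "i < n" "j < n" "\<delta> g $$ (i, j) \<noteq> 0"
      using dcar[OF gH] by (metis carrier_matD eq_matI index_zero_mat(1) index_zero_mat(2) index_zero_mat(3))
    have Eij: "E $$ (i, j) \<noteq> 0" unfolding E_def using ij t dcar[OF gH] by auto
    have "inj (\<lambda>m. g ^\<^sub>m m)"
    proof (rule injI)
      fix m m' assume "g ^\<^sub>m m = g ^\<^sub>m m'"
      then have "(g ^\<^sub>m m) $$ (i, j) = (g ^\<^sub>m m') $$ (i, j)" by simp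
      then have "of_nat m * E $$ (i, j) = of_nat m' * E $$ (i, j)" unfolding pw using ij Ec by simp
      then have "(of_nat m :: 'a) = of_nat m'" using Eij by simp
      then show "m = m'"
      proof (cases m m' rule: linorder_cases)
        case less
        then have "(of_nat (m' - m) :: 'a) \<noteq> 0" using ch0 unfolding char_zero_ring_def by (metis zero_less_diff)
        then show ?thesis using \<open>(of_nat m :: 'a) = of_nat m'\<close> less by (metis of_nat_diff less_imp_le right_minus_eq)
      next
        case greater
        then have "(of_nat (m - m') :: 'a) \<noteq> 0" using ch0 unfolding char_zero_ring_def by (metis zero_less_diff)
        then show ?thesis using \<open>(of_nat m :: 'a) = of_nat m'\<close> greater by (metis of_nat_diff less_imp_le right_minus_eq)
      qed simp
    qed
    moreover have "range (\<lambda>m. g ^\<^sub>m m) \<subseteq> H" using gp_H[OF gH] by auto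
    ultimately have "finite (UNIV :: nat set)" using finH by (meson finite_imageD finite_subset)
    then show False by simp
  qed
  then have "g = 1\<^sub>m n" using pg phi_C by simp
  have "h = h * (ginv n H k * k)" using ginv[OF sgH k] h Hcar right_mult_one_mat by (metis subsetD)
  also have "\<dots> = g * k" unfolding g_def
  proof (rule assoc_mult_mat[symmetric])
    show "h \<in> carrier_mat n n" "ginv n H k \<in> carrier_mat n n" "k \<in> carrier_mat n n"
      using h k ginv[OF sgH k] Hcar by auto
  qed
  finally show ?thesis using \<open>g = 1\<^sub>m n\<close> k Hcar left_mult_one_mat by (metis subsetD)
qed

end


context DEF begin

definition Mset where "Mset = A \<union> H \<union> \<delta> ` H"
definition M0 where "M0 = 1 + (\<Sum>X\<in>Mset. mb X)"

lemma Mset_fin: "finite Mset" unfolding Mset_def using finA finH by auto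

lemma M0_ge: "M0 \<ge> 1" unfolding M0_def by (auto intro!: sum_nonneg mb_nonneg)

lemma mb_le_M0: "X \<in> Mset \<Longrightarrow> mb X \<le> M0"
proof -
  assume X: "X \<in> Mset"
  have "mb X \<le> (\<Sum>X\<in>Mset. mb X)" using X Mset_fin by (intro member_le_sum) (auto intro: mb_nonneg)
  then show ?thesis unfolding M0_def by simp
qed

lemma nV_M0: assumes "X \<in> Mset" "X \<in> carrier_mat n n" "v \<in> carrier_vec n"
  shows "nV (X *\<^sub>v v) \<le> M0 * nV v"
proof -
  have "nV (X *\<^sub>v v) \<le> mb X * nV v" using nV_mat assms by blast
  also have "\<dots> \<le> M0 * nV v" using mb_le_M0[OF assms(1)] nV_nonneg by (intro mult_right_mono) auto
  finally show ?thesis .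
qed

lemma nV_A: "a \<in> A \<Longrightarrow> v \<in> carrier_vec n \<Longrightarrow> nV (a *\<^sub>v v) \<le> M0 * nV v"
  using nV_M0 Acar unfolding Mset_def by blast
lemma nV_H: "h \<in> H \<Longrightarrow> v \<in> carrier_vec n \<Longrightarrow> nV (h *\<^sub>v v) \<le> M0 * nV v"
  using nV_M0 Hcar unfolding Mset_def by blast
lemma nV_d: "h \<in> H \<Longrightarrow> v \<in> carrier_vec n \<Longrightarrow> nV (\<delta> h *\<^sub>v v) \<le> M0 * nV v"
  using nV_M0 dcar unfolding Mset_def by blast

lemma mv_assoc: "X \<in> carrier_mat n n \<Longrightarrow> Y \<in> carrier_mat n n \<Longrightarrow> v \<in> carrier_vec n \<Longrightarrow>
  X *\<^sub>v (Y *\<^sub>v v) = (X * Y) *\<^sub>v v"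
  by (rule assoc_mult_mat_vec[symmetric])

lemma A_inv_vec: "a \<in> A \<Longrightarrow> v \<in> carrier_vec n \<Longrightarrow> ginv n A a *\<^sub>v (a *\<^sub>v v) = v"
  using mv_assoc[of "ginv n A a" a v] ginv[OF sgA] Acar by auto

lemma triple_bound:
  assumes a: "a \<in> A - C" and h: "h \<in> H - C" and h': "h' \<in> H - C"
  shows "\<exists>c\<ge>0. \<forall>x\<in>carrier_vec n. nV (\<delta> h *\<^sub>v x) \<le> c * nV (\<delta> h' *\<^sub>v (a *\<^sub>v (\<delta> h *\<^sub>v x)))"
proof -
  have c: "a \<in> carrier_mat n n" "\<delta> h \<in> carrier_mat n n" "\<delta> h' \<in> carrier_mat n n"
    using a h h' Acar dcar by auto
  let ?R = "\<delta> h' * (a * \<delta> h)"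
  have Rv: "?R *\<^sub>v x = \<delta> h' *\<^sub>v (a *\<^sub>v (\<delta> h *\<^sub>v x))" if "x \<in> carrier_vec n" for x
    using assoc_mult_mat_vec[OF c(3) mult_carrier_mat[OF c(1) c(2)] that] assoc_mult_mat_vec[OF c(1) c(2) that]
    by simp
  have ker: "\<forall>x\<in>carrier_vec n. ?R *\<^sub>v x = 0\<^sub>v n \<longrightarrow> \<delta> h *\<^sub>v x = 0\<^sub>v n"
  proof (intro ballI impI)
    fix x assume x: "x \<in> carrier_vec n" and R0: "?R *\<^sub>v x = 0\<^sub>v n"
    let ?u = "\<delta> h *\<^sub>v x"
    have uc: "?u \<in> carrier_vec n" using c x by auto
    have "?u \<in> mat_im n (\<delta> h)" unfolding mat_im_def using x by blast
    then have "a *\<^sub>v ?u \<in> (\<lambda>w. a *\<^sub>v w) ` mat_im n (\<delta> h)" by blast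
    moreover have "a *\<^sub>v ?u \<in> mat_ker n (\<delta> h')" unfolding mat_ker_def using R0 Rv[OF x] c uc by auto
    ultimately have au0: "a *\<^sub>v ?u \<in> {0\<^sub>v n}" using iik a h h' by (metis (no_types, lifting) IntI)
    have gc: "ginv n A a \<in> carrier_mat n n" using ginv[OF sgA] a Acar by auto
    have "ginv n A a *\<^sub>v (a *\<^sub>v ?u) = 0\<^sub>v n" using au0 mat_vec_zero[OF gc] by simp
    then show "?u = 0\<^sub>v n" using A_inv_vec[of a ?u] a uc by simp
  qed
  obtain cc where cc: "cc \<ge> 0" "\<forall>x\<in>carrier_vec n. nV (\<delta> h *\<^sub>v x) \<le> cc * nV (?R *\<^sub>v x)"
    using ker_bound[OF _ c(2) ker] c by auto
  then show ?thesis using Rv by (intro exI[of _ cc]) auto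
qed

definition T3 where "T3 = (A - C) \<times> (H - C) \<times> (H - C)"

lemma c0_exists: "\<exists>c0>0. \<forall>a\<in>A - C. \<forall>h\<in>H - C. \<forall>h'\<in>H - C. \<forall>x\<in>carrier_vec n.
   nV (\<delta> h *\<^sub>v x) \<le> c0 * nV (\<delta> h' *\<^sub>v (a *\<^sub>v (\<delta> h *\<^sub>v x)))"
proof -
  have "\<forall>p\<in>T3. \<exists>c. c \<ge> 0 \<and> (\<forall>x\<in>carrier_vec n. nV (\<delta> (fst (snd p)) *\<^sub>v x) \<le>
      c * nV (\<delta> (snd (snd p)) *\<^sub>v (fst p *\<^sub>v (\<delta> (fst (snd p)) *\<^sub>v x))))"
    unfolding T3_def using triple_bound by auto
  then obtain cf where cf: "\<forall>p\<in>T3. cf p \<ge> 0 \<and> (\<forall>x\<in>carrier_vec n. nV (\<delta> (fst (snd p)) *\<^sub>v x) \<le>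
      cf p * nV (\<delta> (snd (snd p)) *\<^sub>v (fst p *\<^sub>v (\<delta> (fst (snd p)) *\<^sub>v x))))"
    by (metis (no_types, lifting) bchoice)
  have finT: "finite T3" unfolding T3_def using finA finH by auto
  define c0 where "c0 = 1 + (\<Sum>p\<in>T3. cf p)"
  have le: "cf p \<le> c0" if "p \<in> T3" for p
  proof -
    have "cf p \<le> (\<Sum>p\<in>T3. cf p)" using that finT cf by (intro member_le_sum) auto
    then show ?thesis unfolding c0_def by simp
  qed
  have pos: "c0 > 0" unfolding c0_def using cf by (simp add: add_pos_nonneg sum_nonneg)
  have "\<forall>a\<in>A - C. \<forall>h\<in>H - C. \<forall>h'\<in>H - C. \<forall>x\<in>carrier_vec n.
     nV (\<delta> h *\<^sub>v x) \<le> c0 * nV (\<delta> h' *\<^sub>v (a *\<^sub>v (\<delta> h *\<^sub>v x)))"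
  proof (intro ballI)
    fix a h h' and x :: "'a vec" assume a: "a \<in> A - C" and h: "h \<in> H - C" and h': "h' \<in> H - C" and x: "x \<in> carrier_vec n"
    have p: "(a, h, h') \<in> T3" unfolding T3_def using a h h' by auto
    have "nV (\<delta> h *\<^sub>v x) \<le> cf (a, h, h') * nV (\<delta> h' *\<^sub>v (a *\<^sub>v (\<delta> h *\<^sub>v x)))" using cf p x by auto
    also have "\<dots> \<le> c0 * nV (\<delta> h' *\<^sub>v (a *\<^sub>v (\<delta> h *\<^sub>v x)))"
      using le[OF p] nV_nonneg by (intro mult_right_mono) auto
    finally show "nV (\<delta> h *\<^sub>v x) \<le> c0 * nV (\<delta> h' *\<^sub>v (a *\<^sub>v (\<delta> h *\<^sub>v x)))" .
  qed
  then show ?thesis using pos by blast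
qed

definition c0 where "c0 = (SOME c0. c0 > 0 \<and> (\<forall>a\<in>A - C. \<forall>h\<in>H - C. \<forall>h'\<in>H - C. \<forall>x\<in>carrier_vec n.
   nV (\<delta> h *\<^sub>v x) \<le> c0 * nV (\<delta> h' *\<^sub>v (a *\<^sub>v (\<delta> h *\<^sub>v x)))))"

lemma c0_spec: "c0 > 0 \<and> (\<forall>a\<in>A - C. \<forall>h\<in>H - C. \<forall>h'\<in>H - C. \<forall>x\<in>carrier_vec n.
   nV (\<delta> h *\<^sub>v x) \<le> c0 * nV (\<delta> h' *\<^sub>v (a *\<^sub>v (\<delta> h *\<^sub>v x))))"
  unfolding c0_def by (rule someI_ex[OF c0_exists])

lemma c0_pos: "c0 > 0" using c0_spec by (rule conjunct1)
lemma c0_bound: assumes "a \<in> A - C" "h \<in> H - C" "h' \<in> H - C" "x \<in> carrier_vec n" shows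
   "nV (\<delta> h *\<^sub>v x) \<le> c0 * nV (\<delta> h' *\<^sub>v (a *\<^sub>v (\<delta> h *\<^sub>v x)))"
  using bspec[OF bspec[OF bspec[OF bspec[OF conjunct2[OF c0_spec] assms(1)] assms(2)] assms(3)] assms(4)] .

definition eta where "eta = min (1/2) (1 / (8 * c0 * M0^2))"
definition cA where "cA = 1 / (4 * c0 * M0)"
definition NN where "NN = (M0 + M0 / eta) / cA"

lemma X8_pos: "8 * c0 * M0^2 > 0" using c0_pos M0_ge by simp
lemma eta_pos: "eta > 0" unfolding eta_def using X8_pos by simp
lemma eta_half: "eta \<le> 1/2" unfolding eta_def by simp
lemma eta_le: "eta * (8 * c0 * M0^2) \<le> 1"
proof -
  have "eta \<le> 1 / (8 * c0 * M0^2)" unfolding eta_def by simp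
  then show ?thesis using X8_pos by (simp add: le_divide_eq)
qed
lemma cA_pos: "cA > 0" unfolding cA_def using c0_pos M0_ge by simp

definition YH where "YH = {v \<in> carrier_vec n. v \<noteq> 0\<^sub>v n \<and>
   (\<exists>h\<in>H - C. \<exists>x\<in>carrier_vec n. nV (v - \<delta> h *\<^sub>v x) \<le> eta * nV v)}"
definition YA where "YA = {v \<in> carrier_vec n. v \<noteq> 0\<^sub>v n \<and> (\<forall>h\<in>H - C. cA * nV v \<le> nV (\<delta> h *\<^sub>v v))}"

end


context DEF begin

lemma zero_mat_vec: "x \<in> carrier_vec n \<Longrightarrow> (0\<^sub>m m n :: 'a mat) *\<^sub>v x = 0\<^sub>v m"
  by (intro eq_vecI) (auto simp: scalar_prod_def)

lemma vec_split: fixes M :: "'a mat" shows "v \<in> carrier_vec n \<Longrightarrow> u \<in> carrier_vec n \<Longrightarrow> M \<in> carrier_mat n n \<Longrightarrow>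
  M *\<^sub>v u - M *\<^sub>v v = M *\<^sub>v (u - v)"
  using mult_minus_distrib_mat_vec[of M n n u v] by simp

lemma claim1:
  assumes a: "a \<in> A - C" and v: "v \<in> YH"
  shows "a *\<^sub>v v \<in> YA"
proof -
  obtain h x where vc: "v \<in> carrier_vec n" "v \<noteq> 0\<^sub>v n" and h: "h \<in> H - C" and x: "x \<in> carrier_vec n"
    and close: "nV (v - \<delta> h *\<^sub>v x) \<le> eta * nV v"
    using v unfolding YH_def by blast
  define u where "u = \<delta> h *\<^sub>v x"
  have ac: "a \<in> carrier_mat n n" using a Acar by auto
  have uc: "u \<in> carrier_vec n" unfolding u_def using mult_mat_vec_carrier[OF dcar x] h by auto
  define V where "V = nV v"
  have Vpos: "V > 0" unfolding V_def using nV_pos vc by blast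
  have U: "V \<le> eta * V + nV u" using nV_tri[OF vc(1) uc] close unfolding V_def u_def by simp
  have avc: "a *\<^sub>v v \<in> carrier_vec n" using ac vc by auto
  have av0: "a *\<^sub>v v \<noteq> 0\<^sub>v n"
  proof
    assume "a *\<^sub>v v = 0\<^sub>v n"
    then have "ginv n A a *\<^sub>v (a *\<^sub>v v) = 0\<^sub>v n" using ginv[OF sgA] a Acar mat_vec_zero
      by (metis DiffD1 subsetD)
    then show False using A_inv_vec[of a v] a vc by simp
  qed
  have "cA * nV (a *\<^sub>v v) \<le> nV (\<delta> h' *\<^sub>v (a *\<^sub>v v))" if h': "h' \<in> H - C" for h'
  proof -
    have dc: "\<delta> h' \<in> carrier_mat n n" using dcar h' by auto
    define P where "P = nV (\<delta> h' *\<^sub>v (a *\<^sub>v u))"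
    define Q where "Q = nV (\<delta> h' *\<^sub>v (a *\<^sub>v v))"
    have P1: "nV u \<le> c0 * P" unfolding P_def u_def using c0_bound[OF a h h' x] .
    have eq: "\<delta> h' *\<^sub>v (a *\<^sub>v u) - \<delta> h' *\<^sub>v (a *\<^sub>v v) = \<delta> h' *\<^sub>v (a *\<^sub>v (u - v))"
      using vec_split[OF _ _ dc, of "a *\<^sub>v v" "a *\<^sub>v u"] vec_split[OF vc(1) uc ac] ac uc vc by simp
    have "P \<le> nV (\<delta> h' *\<^sub>v (a *\<^sub>v u) - \<delta> h' *\<^sub>v (a *\<^sub>v v)) + Q"
      unfolding P_def Q_def by (rule nV_tri[of _ n]) (use dc ac uc vc in \<open>auto intro!: mult_mat_vec_carrier\<close>)
    also have "nV (\<delta> h' *\<^sub>v (a *\<^sub>v u) - \<delta> h' *\<^sub>v (a *\<^sub>v v)) \<le> M0 * (M0 * nV (u - v))"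
    proof -
      have "nV (\<delta> h' *\<^sub>v (a *\<^sub>v (u - v))) \<le> M0 * nV (a *\<^sub>v (u - v))"
        using nV_d h' ac uc vc by auto
      also have "\<dots> \<le> M0 * (M0 * nV (u - v))"
        using nV_A a uc vc M0_ge by (intro mult_left_mono) auto
      finally show ?thesis using eq by simp
    qed
    finally have PQ: "P \<le> M0 * (M0 * nV (u - v)) + Q" by simp
    have uv: "nV (u - v) \<le> eta * V" using close nV_sym[OF uc vc(1)] unfolding V_def u_def by simp
    have "M0 * (M0 * nV (u - v)) \<le> M0 * (M0 * (eta * V))"
      using uv M0_ge by (intro mult_left_mono) auto
    also have "\<dots> = (eta * (8 * c0 * M0^2)) * V / (8 * c0)" using c0_pos by (simp add: power2_eq_square field_simps)
    also have "\<dots> \<le> V / (8 * c0)"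
    proof -
      have "(eta * (8 * c0 * M0^2)) * V \<le> 1 * V" using eta_le Vpos by (intro mult_right_mono) auto
      then show ?thesis using c0_pos by (intro divide_right_mono) auto
    qed
    finally have R: "M0 * (M0 * nV (u - v)) \<le> V / (8 * c0)" .
    have "eta * V \<le> (1/2) * V" using eta_half Vpos by (intro mult_right_mono) auto
    then have "V / 2 \<le> nV u" using U by linarith
    then have "V / 2 \<le> c0 * P" using P1 by simp
    then have "V / (2 * c0) \<le> P" using c0_pos by (simp add: field_simps)
    then have "V / (2 * c0) - V / (8 * c0) \<le> Q" using PQ R by simp
    moreover have "V / (2 * c0) - V / (8 * c0) = 3 * V / (8 * c0)" using c0_pos by (simp add: field_simps)
    moreover have "V / (4 * c0) = 2 * (V / (8 * c0))" using c0_pos by (simp add: field_simps)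
    moreover have "3 * V / (8 * c0) = 3 * (V / (8 * c0))" by simp
    moreover have "V / (8 * c0) > 0" using Vpos c0_pos by simp
    ultimately have Q1: "V / (4 * c0) \<le> Q" by linarith
    have "nV (a *\<^sub>v v) \<le> M0 * V" unfolding V_def using nV_A a vc by auto
    then have "cA * nV (a *\<^sub>v v) \<le> cA * (M0 * V)" using cA_pos by (intro mult_left_mono) auto
    also have "cA * (M0 * V) = V / (4 * c0)" unfolding cA_def using M0_ge c0_pos by (simp add: field_simps)
    finally show ?thesis using Q1 unfolding Q_def by simp
  qed
  then show ?thesis unfolding YA_def using avc av0 by blast
qed

lemma phi_vec: "t \<in> K \<Longrightarrow> h \<in> H \<Longrightarrow> v \<in> carrier_vec n \<Longrightarrow>
   phi t h *\<^sub>v v = h *\<^sub>v v + t \<cdot>\<^sub>v (\<delta> h *\<^sub>v v)"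
proof -
  assume a: "t \<in> K" "h \<in> H" "v \<in> carrier_vec n"
  have c: "h \<in> carrier_mat n n" "\<delta> h \<in> carrier_mat n n" using a Hcar dcar by auto
  show ?thesis unfolding phi_def'
    using add_mult_distrib_mat_vec[OF c(1) smult_carrier_mat[OF c(2)] a(3)] smult_mat_vec[OF c(2) a(3)] by simp
qed

lemma claim2:
  assumes t: "t \<in> K" "NN \<le> av t" and h: "h \<in> H - C" and v: "v \<in> YA"
  shows "phi t h *\<^sub>v v \<in> YH"
proof -
  have vc: "v \<in> carrier_vec n" "v \<noteq> 0\<^sub>v n" and vb: "cA * nV v \<le> nV (\<delta> h *\<^sub>v v)"
    using v h unfolding YA_def by auto
  define V where "V = nV v"
  have Vpos: "V > 0" unfolding V_def using nV_pos vc by blast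
  have hc: "h \<in> carrier_mat n n" "\<delta> h \<in> carrier_mat n n" using h Hcar dcar by auto
  define w where "w = phi t h *\<^sub>v v"
  define u where "u = \<delta> h *\<^sub>v (t \<cdot>\<^sub>v v)"
  have wc: "w \<in> carrier_vec n" unfolding w_def using mult_mat_vec_carrier[OF phi_car vc(1)] h by auto
  have tv: "t \<cdot>\<^sub>v v \<in> carrier_vec n" using vc by simp
  have u_eq: "u = t \<cdot>\<^sub>v (\<delta> h *\<^sub>v v)" unfolding u_def using mat_vec_smult[OF hc(2) vc(1) t(1)] .
  have uc: "u \<in> carrier_vec n" unfolding u_eq using hc vc by simp
  have pv: "phi t h *\<^sub>v v = h *\<^sub>v v + t \<cdot>\<^sub>v (\<delta> h *\<^sub>v v)" using phi_vec[OF t(1) _ vc(1)] h by auto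
  have wu: "w - u = h *\<^sub>v v" unfolding w_def u_eq pv using h hc vc
    by (intro eq_vecI) auto
  have d1: "nV (w - u) \<le> M0 * V" unfolding wu V_def using nV_H h vc by auto
  have nu: "nV u = av t * nV (\<delta> h *\<^sub>v v)" unfolding u_eq using nV_smult t by simp
  have "nV u \<le> nV (u - w) + nV w" using nV_tri[OF uc wc] .
  then have "nV u \<le> M0 * V + nV w" using d1 nV_sym[OF uc wc] by simp
  moreover have "av t * (cA * V) \<le> nV u" unfolding nu V_def
    using vb av_nonneg[OF t(1)] by (intro mult_left_mono) auto
  moreover have "NN * (cA * V) \<le> av t * (cA * V)" using t(2) cA_pos Vpos by (intro mult_right_mono) auto
  moreover have "NN * (cA * V) = M0 * V + M0 * V / eta" unfolding NN_def using cA_pos eta_pos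
    by (simp add: field_simps)
  ultimately have W: "M0 * V / eta \<le> nV w" by linarith
  have "M0 * V > 0" using M0_ge Vpos by simp
  then have wpos: "nV w > 0" using W eta_pos by (smt (verit) divide_pos_pos)
  have w0: "w \<noteq> 0\<^sub>v n" using wpos by auto
  have "M0 * V \<le> eta * nV w" using W eta_pos by (simp add: field_simps)
  then have "nV (w - \<delta> h *\<^sub>v (t \<cdot>\<^sub>v v)) \<le> eta * nV w" using d1 unfolding u_def by simp
  then show ?thesis unfolding YH_def w_def[symmetric] using wc w0 h tv by blast
qed

lemma claim3: "v \<in> YH \<Longrightarrow> v \<in> YA \<Longrightarrow> False"
proof -
  assume vH: "v \<in> YH" and vA: "v \<in> YA"
  obtain h x where vc: "v \<in> carrier_vec n" "v \<noteq> 0\<^sub>v n" and h: "h \<in> H - C" and x: "x \<in> carrier_vec n"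
    and close: "nV (v - \<delta> h *\<^sub>v x) \<le> eta * nV v"
    using vH unfolding YH_def by blast
  define V where "V = nV v"
  have Vpos: "V > 0" unfolding V_def using nV_pos vc by blast
  have dc: "\<delta> h \<in> carrier_mat n n" using dcar h by auto
  have uc: "\<delta> h *\<^sub>v x \<in> carrier_vec n" using dc x by auto
  have dd: "\<delta> h *\<^sub>v (\<delta> h *\<^sub>v x) = 0\<^sub>v n"
    using assoc_mult_mat_vec[OF dc dc x] dsq[of h h] h zero_mat_vec[OF x, of n] by auto
  have e: "\<delta> h *\<^sub>v v - 0\<^sub>v n = \<delta> h *\<^sub>v v" using dc vc by (intro eq_vecI) auto
  have "\<delta> h *\<^sub>v v = \<delta> h *\<^sub>v (v - \<delta> h *\<^sub>v x)"
    using vec_split[OF uc vc(1) dc] dd e by simp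
  then have "nV (\<delta> h *\<^sub>v v) \<le> M0 * nV (v - \<delta> h *\<^sub>v x)" using nV_d h vc uc by auto
  also have "\<dots> \<le> M0 * (eta * V)" using close M0_ge unfolding V_def by (intro mult_left_mono) auto
  finally have up: "nV (\<delta> h *\<^sub>v v) \<le> M0 * (eta * V)" .
  have lo: "cA * V \<le> nV (\<delta> h *\<^sub>v v)" using vA h unfolding YA_def V_def by auto
  have "M0 * (eta * V) = (eta * (8 * c0 * M0^2)) * V / (8 * c0 * M0)" using c0_pos M0_ge
    by (simp add: power2_eq_square field_simps)
  also have "\<dots> \<le> V / (8 * c0 * M0)" using eta_le Vpos c0_pos M0_ge
    by (intro divide_right_mono) (auto simp: mult_right_le_one_le)
  finally have "cA * V \<le> V / (8 * c0 * M0)" using up lo by simp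
  moreover have "cA * V = 2 * (V / (8 * c0 * M0))" unfolding cA_def using c0_pos M0_ge by (simp add: field_simps)
  moreover have "V / (8 * c0 * M0) > 0" using Vpos c0_pos M0_ge by simp
  ultimately show False by linarith
qed

lemma claim4: "h \<in> H - C \<Longrightarrow> \<exists>v. v \<in> YH"
proof -
  assume h: "h \<in> H - C"
  have dc: "\<delta> h \<in> carrier_mat n n" using dcar h by auto
  have "\<delta> h \<noteq> 0\<^sub>m n n" using dnC h by auto
  then obtain i j where ij: "i < n" "j < n" "\<delta> h $$ (i, j) \<noteq> 0"
    using dc by (metis carrier_matD eq_matI index_zero_mat(1) index_zero_mat(2) index_zero_mat(3))
  define v where "v = \<delta> h *\<^sub>v unit_vec n j"
  have vc: "v \<in> carrier_vec n" unfolding v_def using dc by auto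
  have "v $ i = (\<Sum>ia<n. \<delta> h $$ (i, ia) * (if ia = j then 1 else 0))" unfolding v_def using dc ij
    by (simp add: scalar_prod_def unit_vec_def atLeast0LessThan)
  also have "\<dots> = (\<Sum>ia<n. if ia = j then \<delta> h $$ (i, ia) else 0)" by (rule sum.cong) auto
  also have "\<dots> = \<delta> h $$ (i, j)" using ij by simp
  finally have "v $ i = \<delta> h $$ (i, j)" .
  then have v0: "v \<noteq> 0\<^sub>v n" using ij by auto
  have "v - \<delta> h *\<^sub>v unit_vec n j = 0\<^sub>v n" unfolding v_def using dc by (intro eq_vecI) auto
  then have "nV (v - \<delta> h *\<^sub>v unit_vec n j) \<le> eta * nV v" using eta_pos nV_nonneg by simp
  then show ?thesis unfolding YH_def using vc v0 h by (intro exI[of _ v]) auto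
qed

end


lemma coset_choice:
  fixes G C :: "'a::division_ring mat set"
  assumes G: "subgroup_GL n G" and Cs: "subgroup_GL n C" and CG: "C \<subseteq> G"
    and idx: "sub_index G C > 2" and x: "x \<in> G"
  shows "\<exists>a\<in>G. a \<notin> C \<and> (\<forall>c\<in>C. a \<noteq> x * c)"
proof -
  define L where "L g = (\<lambda>c. g * c) ` C" for g
  have Gc: "G \<subseteq> carrier_mat n n" using sg_carrier[OF G] .
  have Cc: "C \<subseteq> carrier_mat n n" using sg_carrier[OF Cs] .
  let ?Q = "L ` G"
  have Qdef: "sub_index G C = card ?Q" unfolding sub_index_def L_def by simp
  have LC: "L c = C" if c: "c \<in> C" for c
  proof
    show "L c \<subseteq> C" unfolding L_def using sg_mult[OF Cs c] by auto
    show "C \<subseteq> L c"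
    proof
      fix c' assume c': "c' \<in> C"
      have ci: "ginv n C c \<in> C" "c * ginv n C c = 1\<^sub>m n" using ginv[OF Cs c] by auto
      have cc: "c \<in> carrier_mat n n" "ginv n C c \<in> carrier_mat n n" "c' \<in> carrier_mat n n"
        using c c' ci Cc by auto
      have "c * (ginv n C c * c') = (c * ginv n C c) * c'" by (rule assoc_mult_mat[symmetric, OF cc])
      also have "\<dots> = c'" using ci(2) left_mult_one_mat[OF cc(3)] by simp
      finally have "c' = c * (ginv n C c * c')" by simp
      moreover have "ginv n C c * c' \<in> C" using sg_mult[OF Cs ci(1) c'] .
      ultimately show "c' \<in> L c" unfolding L_def by blast
    qed
  qed
  have "L (1\<^sub>m n) = (\<lambda>c. c) ` C" unfolding L_def using Cc
    by (intro image_cong refl) (auto simp: left_mult_one_mat subset_iff)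
  then have L1: "L (1\<^sub>m n) = C" by simp
  have Lxc: "L (x * c) = L x" if c: "c \<in> C" for c
  proof -
    have "L (x * c) = (\<lambda>c'. x * (c * c')) ` C" unfolding L_def
    proof (rule image_cong[OF refl])
      fix c' assume "c' \<in> C"
      then show "x * c * c' = x * (c * c')" using x c Gc Cc by (intro assoc_mult_mat) auto
    qed
    also have "\<dots> = (\<lambda>c'. x * c') ` L c" unfolding L_def image_image ..
    finally show ?thesis using LC[OF c] unfolding L_def by simp
  qed
  have "\<not> ?Q \<subseteq> {C, L x}"
  proof
    assume "?Q \<subseteq> {C, L x}"
    then have "card ?Q \<le> card {C, L x}" by (rule card_mono[rotated]) simp
    also have "\<dots> \<le> 2" by (simp add: card_insert_if)
    finally show False using idx Qdef by simp
  qed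
  then obtain a where a: "a \<in> G" "L a \<noteq> C" "L a \<noteq> L x" by blast
  have "a \<notin> C" using a LC by blast
  moreover have "\<forall>c\<in>C. a \<noteq> x * c" using a Lxc by blast
  ultimately show ?thesis using a by blast
qed

context DEF begin

abbreviation BB where "BB t \<equiv> phi t ` H"

lemma BB_sg: assumes t: "t \<in> K" shows "subgroup_GL n (BB t)"
  unfolding subgroup_GL_def
proof (intro conjI ballI)
  show "BB t \<subseteq> GL_mat n"
  proof
    fix b assume "b \<in> BB t"
    then obtain h where h: "h \<in> H" "b = phi t h" by blast
    have gi: "ginv n H h \<in> H" using ginv[OF sgH h(1)] by simp
    have "phi t (ginv n H h) \<in> carrier_mat n n \<and> b * phi t (ginv n H h) = 1\<^sub>m n \<and> phi t (ginv n H h) * b = 1\<^sub>m n"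
      using phi_car[OF gi] phi_ginv[OF t h(1)] h(2) by simp
    then show "b \<in> GL_mat n" unfolding GL_mat_def using phi_car[OF h(1)] h(2) by blast
  qed
  show "1\<^sub>m n \<in> BB t" using phi_one sg_one[OF sgH] by (metis image_eqI)
  fix g h assume g: "g \<in> BB t"
  then obtain hg where hg: "hg \<in> H" "g = phi t hg" by blast
  show "\<exists>g'\<in>BB t. g * g' = 1\<^sub>m n \<and> g' * g = 1\<^sub>m n"
    using phi_ginv[OF t hg(1)] ginv[OF sgH hg(1)] hg by blast
  assume "h \<in> BB t"
  then obtain hh where hh: "hh \<in> H" "h = phi t hh" by blast
  show "g * h \<in> BB t" using phi_mult[OF t hg(1) hh(1)] sg_mult[OF sgH hg(1) hh(1)] hg hh by (metis image_eqI)
qed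

lemma C_BB: "C \<subseteq> BB t"
proof
  fix c assume c: "c \<in> C"
  show "c \<in> BB t" by (rule image_eqI[of _ _ c]) (use phi_C[OF c] CH c in auto)
qed

lemma AM_BB: assumes "t \<in> K" shows "AM n A C (BB t)"
  unfolding AM_def using sgA BB_sg[OF assms] sgC CA C_BB by (intro conjI)

lemma BB_letter: assumes "b \<in> BB t" "b \<notin> C" shows "\<exists>h\<in>H - C. b = phi t h"
proof -
  obtain h where h: "h \<in> H" "b = phi t h" using assms(1) by blast
  have "h \<notin> C" using phi_C h assms(2) by metis
  then show ?thesis using h by blast
qed

lemma YH_car: "YH \<subseteq> carrier_vec n" and YA_car: "YA \<subseteq> carrier_vec n"
  unfolding YH_def YA_def by auto

lemma red_words: "reduced A C B w \<Longrightarrow> w \<in> amalg_words A B"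
  unfolding reduced_def amalg_words_def by (auto split: sum.splits)

lemma BB_car: "t \<in> K \<Longrightarrow> BB t \<subseteq> carrier_mat n n" by (rule sg_carrier[OF BB_sg])

lemma letter_car: "t \<in> K \<Longrightarrow> [x] \<in> amalg_words A (BB t) \<Longrightarrow> case_sum id id x \<in> carrier_mat n n"
  using Acar BB_car by (cases x) (auto simp: words_Cons)

lemma pingpong:
  assumes t: "t \<in> K" "NN \<le> av t"
  shows "reduced A C (BB t) w \<Longrightarrow> w \<noteq> [] \<Longrightarrow> v \<in> (if isl (last w) then YH else YA) \<Longrightarrow>
    eval_word n w *\<^sub>v v \<in> (if isl (hd w) then YA else YH)"
proof (induction w arbitrary: v)
  case Nil then show ?case by simp
next
  case (Cons x w')
  have xR: "[x] \<in> amalg_words (A - C) (BB t - C)" using Cons.prems(1) by (simp add: red_Cons)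
  have "[x] \<in> amalg_words A (BB t)" using xR by (cases x) (auto simp: words_Cons)
  then have xc: "case_sum id id x \<in> carrier_mat n n" using letter_car[OF t(1)] by blast
  have vc: "v \<in> carrier_vec n" using Cons.prems(3) YH_car YA_car by (auto split: if_splits)
  have step: "case_sum id id x *\<^sub>v u \<in> (if isl x then YA else YH)" if u: "u \<in> (if isl x then YH else YA)" for u
  proof (cases x)
    case (Inl a)
    then have "a \<in> A - C" using xR by (simp add: words_Cons)
    then show ?thesis using claim1 u Inl by simp
  next
    case (Inr b)
    then have "b \<in> BB t" "b \<notin> C" using xR by (auto simp: words_Cons)
    then obtain h where "h \<in> H - C" "b = phi t h" using BB_letter by blast
    then show ?thesis using claim2[OF t] u Inr by simp
  qed
  show ?case
  proof (cases "w' = []")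
    case True
    have "eval_word n (x # w') *\<^sub>v v = case_sum id id x *\<^sub>v v"
      using True xc by (simp add: eval_Cons right_mult_one_mat)
    then show ?thesis using step Cons.prems(3) True by simp
  next
    case False
    have rw': "reduced A C (BB t) w'" and alt: "isl x \<noteq> isl (hd w')" using Cons.prems(1) False by (auto simp: red_Cons)
    have IH: "eval_word n w' *\<^sub>v v \<in> (if isl (hd w') then YA else YH)"
      using Cons.IH[OF rw' False] Cons.prems(3) False by simp
    have ec: "eval_word n w' \<in> carrier_mat n n"
      using eval_carrier[OF Acar BB_car[OF t(1)] red_words[OF rw']] .
    have "eval_word n (x # w') *\<^sub>v v = case_sum id id x *\<^sub>v (eval_word n w' *\<^sub>v v)"
      using assoc_mult_mat_vec[OF xc ec vc] by (simp add: eval_Cons)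
    moreover have "eval_word n w' *\<^sub>v v \<in> (if isl x then YH else YA)" using IH alt by (cases "isl x") auto
    ultimately show ?thesis using step by simp
  qed
qed

end


lemma red_snoc: "reduced A C B (ws @ [z]) \<Longrightarrow> ws \<noteq> [] \<Longrightarrow> reduced A C B ws \<and> isl (last ws) \<noteq> isl z"
  unfolding reduced_def by (auto simp: successively_append_iff words_append)

context DEF begin

lemma mvc: "X \<in> carrier_mat n n \<Longrightarrow> Y \<in> carrier_mat n n \<Longrightarrow> v \<in> carrier_vec n \<Longrightarrow>
  X *\<^sub>v (Y *\<^sub>v v) = (X * Y) *\<^sub>v v"
  by (rule assoc_mult_mat_vec[symmetric])

lemma C_inv_mem: "c \<in> C \<Longrightarrow> ginv n C c \<in> C \<and> c * ginv n C c = 1\<^sub>m n \<and> ginv n C c * c = 1\<^sub>m n"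
  using ginv[OF sgC] by blast

lemma Ccar: "C \<subseteq> carrier_mat n n" using sg_carrier[OF sgC] .

lemma not_in_C_mult:
  assumes a: "a \<in> carrier_mat n n" and a': "a' \<in> carrier_mat n n" and g: "g \<in> carrier_mat n n"
    and aa': "a * a' = 1\<^sub>m n" and nc: "\<forall>c\<in>C. a \<noteq> g * c"
  shows "a' * g \<notin> C"
proof
  assume c: "a' * g \<in> C"
  let ?c = "a' * g"
  have ci: "ginv n C ?c \<in> C" "?c * ginv n C ?c = 1\<^sub>m n" using C_inv_mem[OF c] by auto
  have cic: "ginv n C ?c \<in> carrier_mat n n" using ci Ccar by auto
  have "a * ?c = g" using assoc_mult_mat[OF a a' g, symmetric] aa' left_mult_one_mat[OF g] by simp
  then have "g * ginv n C ?c = a * (?c * ginv n C ?c)"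
    using assoc_mult_mat[OF a mult_carrier_mat[OF a' g] cic] by simp
  then have "g * ginv n C ?c = a" using ci right_mult_one_mat[OF a] by simp
  then show False using nc ci by metis
qed

lemma not_in_C_mult2:
  assumes x: "x \<in> carrier_mat n n" and xi: "xi \<in> carrier_mat n n" and y: "y \<in> carrier_mat n n"
    and inv: "xi * x = 1\<^sub>m n" and nc: "\<forall>c\<in>C. y \<noteq> xi * c"
  shows "x * y \<notin> C"
proof
  assume c: "x * y \<in> C"
  have "xi * (x * y) = (xi * x) * y" using assoc_mult_mat[OF xi x y] by simp
  then have "xi * (x * y) = y" using inv left_mult_one_mat[OF y] by simp
  then show False using nc c by metis
qed

lemma inv_not_C: assumes h: "h \<in> carrier_mat n n" "h' \<in> carrier_mat n n" "h' * h = 1\<^sub>m n" and hC: "h \<notin> C"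
  shows "h' \<notin> C"
proof
  assume "h' \<in> C"
  moreover have "h' * h \<in> C" using h sg_one[OF sgC] by simp
  ultimately have "h \<in> C" using sg_cancel_left[OF sgC h(1)] by blast
  then show False using hC by simp
qed

theorem pp:
  assumes t: "t \<in> K" "NN \<le> av t" and idx: "sub_index A C > 2 \<or> sub_index H C > 2"
    and red: "reduced A C (BB t) w" and ne: "w \<noteq> []"
  shows "eval_word n w \<noteq> 1\<^sub>m n"
proof
  assume E: "eval_word n w = 1\<^sub>m n"
  have Bc: "BB t \<subseteq> carrier_mat n n" using BB_car[OF t(1)] .
  have ev1: "eval_word n w *\<^sub>v v = v" if "v \<in> carrier_vec n" for v using E that by simp
  obtain x w' where w: "w = x # w'" using ne by (cases w) auto
  have xR: "[x] \<in> amalg_words (A - C) (BB t - C)" using red w by (simp add: red_Cons)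
  have xW: "[x] \<in> amalg_words A (BB t)" using xR by (cases x) (auto simp: words_Cons)
  have xc: "case_sum id id x \<in> carrier_mat n n" using letter_car[OF t(1) xW] .
  have one_C: "1\<^sub>m n \<in> C" using sg_one[OF sgC] .
  show False
  proof (cases "w' = []")
    case True
    have "eval_word n w = case_sum id id x" using w True xc by (simp add: eval_Cons right_mult_one_mat)
    then have "case_sum id id x = 1\<^sub>m n" using E by simp
    then show False using xR one_C by (cases x) (auto simp: words_Cons)
  next
    case False
    have rw': "reduced A C (BB t) w'" and alt: "isl x \<noteq> isl (hd w')"
      using red w False by (auto simp: red_Cons)
    obtain y r where w'yr: "w' = y # r" using False by (cases w') auto
    have yR: "[y] \<in> amalg_words (A - C) (BB t - C)" using rw' w'yr by (simp add: red_Cons)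
    have ex: "(\<exists>a0. a0 \<in> A - C) \<and> (\<exists>h0. h0 \<in> H - C)"
    proof (cases x)
      case (Inl a)
      then obtain b where "y = Inr b" using alt w'yr by (cases y) auto
      then have "b \<in> BB t" "b \<notin> C" using yR by (auto simp: words_Cons)
      then show ?thesis using BB_letter Inl xR by (auto simp: words_Cons)
    next
      case (Inr b)
      then obtain a where "y = Inl a" using alt w'yr by (cases y) auto
      then have "a \<in> A - C" using yR by (auto simp: words_Cons)
      moreover have "b \<in> BB t" "b \<notin> C" using Inr xR by (auto simp: words_Cons)
      ultimately show ?thesis using BB_letter by blast
    qed
    then obtain a0 h0 where a0: "a0 \<in> A - C" and h0: "h0 \<in> H - C" by blast
    obtain vH where vH: "vH \<in> YH" using claim4[OF h0] by blast
    have vA: "a0 *\<^sub>v vH \<in> YA" using claim1[OF a0 vH] .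
    define vA' where "vA' = a0 *\<^sub>v vH"
    have vA'Y: "vA' \<in> YA" unfolding vA'_def using vA .
    have vHc: "vH \<in> carrier_vec n" and vAc: "vA' \<in> carrier_vec n" using vH vA'Y YH_car YA_car by auto
    define ws where "ws = butlast w"
    define z where "z = last w"
    have wsz: "w = ws @ [z]" unfolding ws_def z_def using ne by simp
    have wsne: "ws \<noteq> []" unfolding ws_def using w False by simp
    have rws: "reduced A C (BB t) ws" and alt2: "isl (last ws) \<noteq> isl z"
      using red_snoc[of A C "BB t" ws z] red wsz wsne by auto
    have hdws: "hd ws = x" using w wsne unfolding ws_def by (cases w') auto
    have lastw': "last w' = z" unfolding z_def using w False by simp
    have zR: "[z] \<in> amalg_words (A - C) (BB t - C)"
      using red wsz unfolding reduced_def by (simp add: words_append)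
    have zW: "[z] \<in> amalg_words A (BB t)" using zR by (cases z) (auto simp: words_Cons)
    have zc: "case_sum id id z \<in> carrier_mat n n" using letter_car[OF t(1) zW] .
    have ew'c: "eval_word n w' \<in> carrier_mat n n"
      using eval_carrier[OF Acar Bc red_words[OF rw']] .
    have ewsc: "eval_word n ws \<in> carrier_mat n n"
      using eval_carrier[OF Acar Bc red_words[OF rws]] .
    have Ex: "case_sum id id x * eval_word n w' = 1\<^sub>m n" using E w by (simp add: eval_Cons)
    have Ez: "eval_word n ws * case_sum id id z = 1\<^sub>m n"
    proof -
      have "eval_word n w = eval_word n ws * eval_word n [z]"
        unfolding wsz by (rule eval_append[OF Acar Bc red_words[OF rws] zW])
      then show ?thesis using E zc by (simp add: eval_Cons right_mult_one_mat)
    qed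
    have PPw': "eval_word n w' *\<^sub>v v \<in> (if isl (hd w') then YA else YH)"
      if "v \<in> (if isl z then YH else YA)" for v
      using pingpong[OF t rw' False] that lastw' by simp
    have PPws: "eval_word n ws *\<^sub>v v \<in> (if isl x then YA else YH)"
      if "v \<in> (if isl (last ws) then YH else YA)" for v
      using pingpong[OF t rws wsne] that hdws by simp
    have PPw: "eval_word n w *\<^sub>v v \<in> (if isl x then YA else YH)"
      if "v \<in> (if isl z then YH else YA)" for v
      using pingpong[OF t red ne] that w z_def by simp
    consider (TT) "isl x" "isl z" | (FF) "\<not> isl x" "\<not> isl z" | (TF) "isl x" "\<not> isl z" | (FT) "\<not> isl x" "isl z"
      by blast
    then show False
    proof cases
      case TT
      have "eval_word n w *\<^sub>v vH \<in> YA" using PPw[of vH] TT vH by simp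
      then show False using ev1[OF vHc] claim3 vH by simp
    next
      case FF
      have "eval_word n w *\<^sub>v vA' \<in> YH" using PPw[of vA'] FF vA'Y by simp
      then show False using ev1[OF vAc] claim3 vA'Y by simp
    next
      case TF
      obtain g1 where x1: "x = Inl g1" using TF by (cases x) auto
      obtain bm where z1: "z = Inr bm" using TF by (cases z) auto
      have g1: "g1 \<in> A - C" using xR x1 by (simp add: words_Cons)
      have g1c: "g1 \<in> carrier_mat n n" using g1 Acar by auto
      have bm: "bm \<in> BB t" "bm \<notin> C" using zR z1 by (auto simp: words_Cons)
      from idx show False
      proof
        assume iA: "sub_index A C > 2"
        obtain a where a: "a \<in> A" "a \<notin> C" "\<forall>c\<in>C. a \<noteq> g1 * c"
          using coset_choice[OF sgA sgC CA iA] g1 by blast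
        define a' where "a' = ginv n A a"
        have a'p: "a' \<in> A" "a * a' = 1\<^sub>m n" "a' * a = 1\<^sub>m n" using ginv[OF sgA a(1)] unfolding a'_def by auto
        have ac: "a \<in> carrier_mat n n" "a' \<in> carrier_mat n n" using a(1) a'p(1) Acar by auto
        have L: "a' * g1 \<in> A - C" using not_in_C_mult[OF ac g1c a'p(2) a(3)] sg_mult[OF sgA a'p(1)] g1 by auto
        have u1: "a *\<^sub>v vH \<in> YA" using claim1 a vH by simp
        have u2: "eval_word n w' *\<^sub>v (a *\<^sub>v vH) \<in> YH" using PPw'[OF _] u1 TF alt by simp
        have u3: "(a' * g1) *\<^sub>v (eval_word n w' *\<^sub>v (a *\<^sub>v vH)) \<in> YA" using claim1[OF L u2] .
        have avc: "a *\<^sub>v vH \<in> carrier_vec n" using ac vHc by simp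
        have "(a' * g1) *\<^sub>v (eval_word n w' *\<^sub>v (a *\<^sub>v vH)) = a' *\<^sub>v (g1 *\<^sub>v (eval_word n w' *\<^sub>v (a *\<^sub>v vH)))"
          using mvc[OF ac(2) g1c] ew'c avc by simp
        also have "g1 *\<^sub>v (eval_word n w' *\<^sub>v (a *\<^sub>v vH)) = (g1 * eval_word n w') *\<^sub>v (a *\<^sub>v vH)"
          using mvc[OF g1c ew'c avc] .
        also have "\<dots> = a *\<^sub>v vH" using Ex x1 avc by simp
        also have "a' *\<^sub>v (a *\<^sub>v vH) = vH" using mvc[OF ac(2) ac(1) vHc] a'p vHc by simp
        finally have "vH \<in> YA" using u3 by simp
        then show False using claim3[OF vH] by blast
      next
        assume iH: "sub_index H C > 2"
        obtain hm where hm: "hm \<in> H - C" "bm = phi t hm" using BB_letter bm by blast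
        define hmi where "hmi = ginv n H hm"
        have hmi: "hmi \<in> H" "hm * hmi = 1\<^sub>m n" "hmi * hm = 1\<^sub>m n" using ginv[OF sgH] hm unfolding hmi_def by auto
        obtain h where h: "h \<in> H" "h \<notin> C" "\<forall>c\<in>C. h \<noteq> hmi * c"
          using coset_choice[OF sgH sgC CH iH hmi(1)] by blast
        define h' where "h' = ginv n H h"
        have h'p: "h' \<in> H" "h * h' = 1\<^sub>m n" "h' * h = 1\<^sub>m n" using ginv[OF sgH h(1)] unfolding h'_def by auto
        have hc: "h \<in> carrier_mat n n" "h' \<in> carrier_mat n n" "hm \<in> carrier_mat n n" "hmi \<in> carrier_mat n n"
          using h h'p hm hmi Hcar by auto
        have hmh: "hm * h \<in> H - C"
        proof -
          have "hm * h \<notin> C"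
          proof
            assume c: "hm * h \<in> C"
            have "hmi * (hm * h) = (hmi * hm) * h" using assoc_mult_mat[OF hc(4) hc(3) hc(1)] by simp
            then have "hmi * (hm * h) = h" using hmi(3) left_mult_one_mat[OF hc(1)] by simp
            then show False using h(3) c by metis
          qed
          then show ?thesis using sg_mult[OF sgH] hm h by auto
        qed
        have h'C: "h' \<in> H - C" using inv_not_C[OF hc(1) hc(2) h'p(3) h(2)] h'p by simp
        have u1: "phi t (hm * h) *\<^sub>v vA' \<in> YH" using claim2[OF t hmh vA'Y] .
        have u2: "eval_word n ws *\<^sub>v (phi t (hm * h) *\<^sub>v vA') \<in> YA" using PPws u1 TF alt2 by simp
        have u3: "phi t h' *\<^sub>v (eval_word n ws *\<^sub>v (phi t (hm * h) *\<^sub>v vA')) \<in> YH" using claim2[OF t h'C u2] .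
        have pc: "phi t h \<in> carrier_mat n n" "phi t h' \<in> carrier_mat n n" "phi t hm \<in> carrier_mat n n"
          using phi_car h h'p hm by auto
        have phvc: "phi t h *\<^sub>v vA' \<in> carrier_vec n" using pc vAc by simp
        have "phi t (hm * h) *\<^sub>v vA' = phi t hm *\<^sub>v (phi t h *\<^sub>v vA')"
          using phi_mult[OF t(1)] hm h mvc[OF pc(3) pc(1) vAc] by simp
        then have "eval_word n ws *\<^sub>v (phi t (hm * h) *\<^sub>v vA') = (eval_word n ws * phi t hm) *\<^sub>v (phi t h *\<^sub>v vA')"
          using mvc[OF ewsc pc(3) phvc] by simp
        also have "\<dots> = phi t h *\<^sub>v vA'" using Ez z1 hm phvc by simp
        finally have "phi t h' *\<^sub>v (eval_word n ws *\<^sub>v (phi t (hm * h) *\<^sub>v vA')) = (phi t h' * phi t h) *\<^sub>v vA'"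
          using mvc[OF pc(2) pc(1) vAc] by simp
        also have "\<dots> = vA'" using phi_ginv(2)[OF t(1) h(1)] vAc unfolding h'_def by simp
        finally have "vA' \<in> YH" using u3 by simp
        then show False using claim3[OF _ vA'Y] by blast
      qed
    next
      case FT
      obtain b1 where x1: "x = Inr b1" using FT by (cases x) auto
      obtain am where z1: "z = Inl am" using FT by (cases z) auto
      have am: "am \<in> A - C" using zR z1 by (simp add: words_Cons)
      have amc: "am \<in> carrier_mat n n" using am Acar by auto
      have b1: "b1 \<in> BB t" "b1 \<notin> C" using xR x1 by (auto simp: words_Cons)
      from idx show False
      proof
        assume iA: "sub_index A C > 2"
        define ami where "ami = ginv n A am"
        have amip: "ami \<in> A" "am * ami = 1\<^sub>m n" "ami * am = 1\<^sub>m n" using ginv[OF sgA] am unfolding ami_def by auto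
        obtain a where a: "a \<in> A" "a \<notin> C" "\<forall>c\<in>C. a \<noteq> ami * c"
          using coset_choice[OF sgA sgC CA iA amip(1)] by blast
        define a' where "a' = ginv n A a"
        have a'p: "a' \<in> A" "a * a' = 1\<^sub>m n" "a' * a = 1\<^sub>m n" using ginv[OF sgA a(1)] unfolding a'_def by auto
        have ac: "a \<in> carrier_mat n n" "a' \<in> carrier_mat n n" "ami \<in> carrier_mat n n"
          using a(1) a'p(1) amip(1) Acar by auto
        have ama: "am * a \<in> A - C"
          using not_in_C_mult2[OF amc ac(3) ac(1) amip(3) a(3)] sg_mult[OF sgA] am a by auto
        have a'C: "a' \<in> A - C" using inv_not_C[OF ac(1) ac(2) a'p(3) a(2)] a'p by simp
        have u1: "(am * a) *\<^sub>v vH \<in> YA" using claim1[OF ama vH] .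
        have u2: "eval_word n ws *\<^sub>v ((am * a) *\<^sub>v vH) \<in> YH" using PPws u1 FT alt2 by simp
        have u3: "a' *\<^sub>v (eval_word n ws *\<^sub>v ((am * a) *\<^sub>v vH)) \<in> YA" using claim1[OF a'C u2] .
        have avc: "a *\<^sub>v vH \<in> carrier_vec n" using ac vHc by simp
        have "(am * a) *\<^sub>v vH = am *\<^sub>v (a *\<^sub>v vH)" using mvc[OF amc ac(1) vHc] by simp
        then have "eval_word n ws *\<^sub>v ((am * a) *\<^sub>v vH) = (eval_word n ws * am) *\<^sub>v (a *\<^sub>v vH)"
          using mvc[OF ewsc amc avc] by simp
        also have "\<dots> = a *\<^sub>v vH" using Ez z1 avc by simp
        finally have "a' *\<^sub>v (eval_word n ws *\<^sub>v ((am * a) *\<^sub>v vH)) = (a' * a) *\<^sub>v vH"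
          using mvc[OF ac(2) ac(1) vHc] by simp
        also have "\<dots> = vH" using a'p vHc by simp
        finally have "vH \<in> YA" using u3 by simp
        then show False using claim3[OF vH] by blast
      next
        assume iH: "sub_index H C > 2"
        obtain h1 where h1: "h1 \<in> H - C" "b1 = phi t h1" using BB_letter b1 by blast
        obtain h where h: "h \<in> H" "h \<notin> C" "\<forall>c\<in>C. h \<noteq> h1 * c"
          using coset_choice[OF sgH sgC CH iH] h1 by blast
        define h' where "h' = ginv n H h"
        have h'p: "h' \<in> H" "h * h' = 1\<^sub>m n" "h' * h = 1\<^sub>m n" using ginv[OF sgH h(1)] unfolding h'_def by auto
        have hc: "h \<in> carrier_mat n n" "h' \<in> carrier_mat n n" "h1 \<in> carrier_mat n n"
          using h h'p h1 Hcar by auto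
        have hh1: "h' * h1 \<in> H - C"
          using not_in_C_mult[OF hc(1) hc(2) hc(3) h'p(2) h(3)] sg_mult[OF sgH] h'p h1 by auto
        have hC: "h \<in> H - C" using h by simp
        have u1: "phi t h *\<^sub>v vA' \<in> YH" using claim2[OF t hC vA'Y] .
        have u2: "eval_word n w' *\<^sub>v (phi t h *\<^sub>v vA') \<in> YA" using PPw' u1 FT alt by simp
        have u3: "phi t (h' * h1) *\<^sub>v (eval_word n w' *\<^sub>v (phi t h *\<^sub>v vA')) \<in> YH"
          using claim2[OF t hh1 u2] .
        have pc: "phi t h \<in> carrier_mat n n" "phi t h' \<in> carrier_mat n n" "phi t h1 \<in> carrier_mat n n"
          using phi_car h h'p h1 by auto
        have phvc: "phi t h *\<^sub>v vA' \<in> carrier_vec n" using pc vAc by simp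
        have evc: "eval_word n w' *\<^sub>v (phi t h *\<^sub>v vA') \<in> carrier_vec n" using ew'c phvc by simp
        have "phi t (h' * h1) *\<^sub>v (eval_word n w' *\<^sub>v (phi t h *\<^sub>v vA'))
            = phi t h' *\<^sub>v (phi t h1 *\<^sub>v (eval_word n w' *\<^sub>v (phi t h *\<^sub>v vA')))"
          using phi_mult[OF t(1)] h'p h1 mvc[OF pc(2) pc(3) evc] by simp
        also have "phi t h1 *\<^sub>v (eval_word n w' *\<^sub>v (phi t h *\<^sub>v vA')) = (phi t h1 * eval_word n w') *\<^sub>v (phi t h *\<^sub>v vA')"
          using mvc[OF pc(3) ew'c phvc] .
        also have "\<dots> = phi t h *\<^sub>v vA'" using Ex x1 h1 phvc by simp
        also have "phi t h' *\<^sub>v (phi t h *\<^sub>v vA') = (phi t h' * phi t h) *\<^sub>v vA'"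
          using mvc[OF pc(2) pc(1) vAc] .
        also have "\<dots> = vA'" using phi_ginv(2)[OF t(1) h(1)] vAc unfolding h'_def by simp
        finally have "vA' \<in> YH" using u3 by simp
        then show False using claim3[OF _ vA'Y] by blast
      qed
    qed
  qed
qed

end


context DEF begin

lemma induced:
  assumes t: "t \<in> K" "t \<noteq> 0"
  shows "amalg_induced_iso n (phi t) A C H (BB t)"
proof -
  let ?f = "phi t" and ?B = "BB t"
  define g where "g = inv_into H ?f"
  have inj: "inj_on ?f H" using phi_inj[OF t] by (meson inj_onI)
  have gf: "g (?f h) = h" if "h \<in> H" for h unfolding g_def using inv_into_f_f[OF inj that] .
  have fg: "?f (g b) = b" if "b \<in> ?B" for b unfolding g_def using f_inv_into_f[OF that] .
  have gH: "g b \<in> H" if "b \<in> ?B" for b unfolding g_def using inv_into_into[OF that] .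
  have f1: "?f (1\<^sub>m n) = 1\<^sub>m n" using phi_one .
  have g1: "g (1\<^sub>m n) = 1\<^sub>m n" using gf[OF sg_one[OF sgH]] f1 by simp
  have fC: "?f c = c" if "c \<in> C" for c using phi_C that .
  have gC: "g c = c" if "c \<in> C" for c using gf[of c] fC[OF that] CH that by auto
  have mw: "map_word F (u @ v) = map_word F u @ map_word F v" for F u v unfolding map_word_def by simp
  have stf: "amalg_step n A C ?B (map_word ?f u) (map_word ?f v)" if "amalg_step n A C H u v" for u v
    using that
  proof (induction rule: amalg_step.induct)
    case (mulA x y u v) then show ?case using amalg_step.mulA[of x A y n C ?B "map_word ?f u" "map_word ?f v"]
      by (simp add: mw map_word_def)
  next
    case (mulB x y u v)
    have "?f (x * y) = ?f x * ?f y" using phi_mult[OF t(1) mulB] .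
    then show ?case using amalg_step.mulB[of "?f x" ?B "?f y" n A C "map_word ?f u" "map_word ?f v"] mulB
      by (simp add: mw map_word_def)
  next
    case (oneA u v) then show ?case using amalg_step.oneA[of n A C ?B "map_word ?f u" "map_word ?f v"]
      by (simp add: mw map_word_def)
  next
    case (oneB u v) then show ?case using amalg_step.oneB[of n A C ?B "map_word ?f u" "map_word ?f v"] f1
      by (simp add: mw map_word_def)
  next
    case (amal c u v) then show ?case using amalg_step.amal[of c C n A ?B "map_word ?f u" "map_word ?f v"] fC
      by (simp add: mw map_word_def)
  qed
  have stg: "amalg_step n A C H (map_word g u) (map_word g v)" if "amalg_step n A C ?B u v" for u v
    using that
  proof (induction rule: amalg_step.induct)
    case (mulA x y u v) then show ?case using amalg_step.mulA[of x A y n C H "map_word g u" "map_word g v"]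
      by (simp add: mw map_word_def)
  next
    case (mulB x y u v)
    have "g (x * y) = g x * g y"
    proof -
      have "x * y = ?f (g x * g y)" using phi_mult[OF t(1) gH[OF mulB(1)] gH[OF mulB(2)]] fg mulB by simp
      then show ?thesis using gf sg_mult[OF sgH gH[OF mulB(1)] gH[OF mulB(2)]] by simp
    qed
    then show ?case using amalg_step.mulB[of "g x" H "g y" n A C "map_word g u" "map_word g v"] mulB gH
      by (simp add: mw map_word_def)
  next
    case (oneA u v) then show ?case using amalg_step.oneA[of n A C H "map_word g u" "map_word g v"]
      by (simp add: mw map_word_def)
  next
    case (oneB u v) then show ?case using amalg_step.oneB[of n A C H "map_word g u" "map_word g v"] g1
      by (simp add: mw map_word_def)
  next
    case (amal c u v) then show ?case using amalg_step.amal[of c C n A H "map_word g u" "map_word g v"] gC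
      by (simp add: mw map_word_def)
  qed
  have aef: "amalg_eq n A C ?B (map_word ?f u) (map_word ?f v)" if "amalg_eq n A C H u v" for u v
    using that unfolding amalg_eq_def by (rule equivclp_map[rotated]) (rule stf)
  have aeg: "amalg_eq n A C H (map_word g u) (map_word g v)" if "amalg_eq n A C ?B u v" for u v
    using that unfolding amalg_eq_def by (rule equivclp_map[rotated]) (rule stg)
  have gfw: "map_word g (map_word ?f w) = w" if "w \<in> amalg_words A H" for w
    using that unfolding map_word_def amalg_words_def
    by (induction w) (auto split: sum.splits simp: gf)
  have fgw: "map_word ?f (map_word g w) = w" if "w \<in> amalg_words A ?B" for w
    using that unfolding map_word_def amalg_words_def
    by (induction w) (auto split: sum.splits simp: fg)
  have gW: "map_word g w \<in> amalg_words A H" if "w \<in> amalg_words A ?B" for w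
    using that unfolding map_word_def amalg_words_def
  proof (induction w)
    case (Cons x w) then show ?case by (cases x) (auto simp: gH)
  qed simp
  show ?thesis unfolding amalg_induced_iso_def
  proof (intro conjI ballI)
    fix w1 w2 assume w: "w1 \<in> amalg_words A H" "w2 \<in> amalg_words A H"
    show "amalg_eq n A C H w1 w2 = amalg_eq n A C ?B (map_word ?f w1) (map_word ?f w2)"
      using aef aeg[of "map_word ?f w1" "map_word ?f w2"] gfw w by auto
  next
    fix w' assume w': "w' \<in> amalg_words A ?B"
    show "\<exists>w\<in>amalg_words A H. amalg_eq n A C ?B (map_word ?f w) w'"
      using gW[OF w'] fgw[OF w'] ae_refl by metis
  qed
qed

theorem main_DEF:
  assumes idx: "sub_index A C > 2 \<or> sub_index H C > 2"
  shows "\<exists>N::real. \<forall>t\<in>K. t \<noteq> 0 \<longrightarrow> av t \<ge> N \<longrightarrow>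
           amalg_canonical_iso n A C (deform \<delta> t ` H) \<and>
           amalg_induced_iso n (deform \<delta> t) A C H (deform \<delta> t ` H)"
proof (intro exI[of _ NN] ballI impI conjI)
  fix t assume t: "t \<in> K" "t \<noteq> 0" "NN \<le> av t"
  interpret am: AM n A C "BB t" using AM_BB[OF t(1)] .
  have "amalg_canonical_iso n A C (BB t)"
    using am.canonical_from_pp pp[OF t(1) t(3) idx] by blast
  then show "amalg_canonical_iso n A C (deform \<delta> t ` H)" unfolding phi_def[abs_def] by simp
  show "amalg_induced_iso n (deform \<delta> t) A C H (deform \<delta> t ` H)"
    using induced[OF t(1) t(2)] unfolding phi_def[abs_def] by simp
qed

end


theorem theorem4p8:
  fixes K :: "'d::division_ring set" and av :: "'d \<Rightarrow> real"
    and n :: nat and A H C :: "'d mat set" and \<delta> :: "'d mat \<Rightarrow> 'd mat"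
  assumes "is_local_field K av" and "char_zero_ring TYPE('d)" and "finite_dim_over K"
    and "finite_subgroup_GL n A" and "finite_subgroup_GL n H"
    and "C = A \<inter> H"
    and "sub_index A C > 2 \<or> sub_index H C > 2"
    and "first_order_deformation n H \<delta>"
    and "\<forall>t\<in>K. t \<noteq> 0 \<longrightarrow> (\<forall>h\<in>H. deform \<delta> t h \<in> GL_mat n)"
    and "\<forall>g\<in>H. \<delta> g = 0\<^sub>m n n \<longleftrightarrow> g \<in> C"
    and "\<forall>a\<in>A - C. \<forall>h\<in>H - C. \<forall>h'\<in>H - C.
           ((\<lambda>w. a *\<^sub>v w) ` mat_im n (\<delta> h)) \<inter> mat_ker n (\<delta> h') = {0\<^sub>v n}"
  shows "\<exists>N::real. \<forall>t\<in>K. t \<noteq> 0 \<longrightarrow> av t \<ge> N \<longrightarrow>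
           amalg_canonical_iso n A C (deform \<delta> t ` H) \<and>
           amalg_induced_iso n (deform \<delta> t) A C H (deform \<delta> t ` H)"
proof -
  have kd: "KD K av" using assms(1) unfolding is_local_field_def KD_def by blast
  interpret KD K av using kd .
  obtain S where S: "spans S" "\<forall>k. (\<forall>s\<in>S. k s \<in> K) \<longrightarrow> (\<Sum>s\<in>S. k s * s) = 0 \<longrightarrow> (\<forall>s\<in>S. k s = 0)"
    using exists_basis[OF assms(3)] by blast
  have "DEF K av S n A H C \<delta>"
    unfolding DEF_def DEF_axioms_def KB_axioms_def KB_def
    using kd S assms(2,4,5,6,8,10,11) by blast
  then interpret DEF K av S n A H C \<delta> .
  show ?thesis using main_DEF[OF assms(7)] .
qed

end
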